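(* Let $G>0$ and let $W:GL_+(3,\mathbb{R})\to\mathbb{R}$ be a strain-energy function as described in the context (continuously differentiable, objective, isotropic, homogeneous of degree $-1$), and let $g:(0,\infty)\to\mathbb{R}$ be the associated function defined in the context. Assume furthermore that $g$ is $C^3$ and that \[ g''(1) \ge 50\Big(50 + \sup_{|y-1|\le \frac12} |g'''(y)|\Big). \] Then there exists $\mu_0>0$ such that for every $\mu\in[-\mu_0,\mu_0]$ there exist $\bar\rho>0$ and a classical solution $\varphi:[0,1]\to[0,\infty)$, twice differentiable with $\varphi(0)=\varphi''(0)=0$ and $\varphi'>0$ on $[0,1]$, of the system \[ \begin{cases} \displaystyle \frac{\varphi^2}{R^5}\,\partial_R\Big(\frac{R^4}{\varphi}\,g'(y)\Big) + \frac{\varphi}{R^2}\,g(y) = \Big(\frac{4\pi}{3}G\bar\rho + \mu\,\lambda^3\Big)\bar\rho^{-\frac13}\,\varphi, \\[2mm] g'(y(1)) = 0,\qquad \varphi(1)=1, \end{cases} \] where \[ \lambda(R)=\begin{cases}\varphi(R)/R, & R\in(0,1],\\ \varphi'(0), & R=0,\end{cases}\qquad y(R)=\frac{\varphi'(R)}{\lambda(R)},\quad R\in[0,1]. \]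
   Context: Setting: $G>0$ is Newton's gravitational constant, $\mathcal{B}=\{X\in\mathbb{R}^3:|X|\le1\}$ is the reference domain, and $\bar\rho>0$ is a (constant) reference density. $GL_+(3,\mathbb{R})$ denotes the real $3\times3$ matrices with positive determinant and $SO(3,\mathbb{R})$ the rotations. The strain-energy function $W:GL_+(3,\mathbb{R})\to\mathbb{R}$ is continuously differentiable and satisfies: objectivity $W(OF)=W(F)$ and isotropy $W(FO)=W(F)$ for all $F\in GL_+(3,\mathbb{R})$, $O\in SO(3,\mathbb{R})$; homogeneity of degree $-1$: $W(\sigma F)=\sigma^{-1}W(F)$ for $\sigma>0$; and the normalization $W(I)=\bar\rho^{1/3}$. For $y>0$ and a unit vector $\omega\in\mathbb{S}^2$, the quantity $W(I+(y-1)\,\omega\otimes\omega)$ is independent of $\omega$ (by objectivity and isotropy), and one defines $g(y)=\bar\rho^{-1/3}\,W(I+(y-1)\,\omega\otimes\omega)$. In this setting (with the Piola–Kirchhoff stress $\bar\rho\,\partial W/\partial F$ continuously differentiable in the material variable), $g(1)=1$ and $g'(1)=-\tfrac13$. The displayed system is the equation for the spatial profile $\varphi$ of separable (homologous) spherically symmetric solutions $x(t,X)=q(t)\varphi(|X|)\,X/|X|$ of the equations of motion of a self-gravitating hyperelastic body with traction-free boundary, with $q$ solving $q^2\ddot q=\mu$, $q(0)=1$. *)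

theory Defs
  imports "HOL-Analysis.Analysis"
begin

definition GLp3 :: "(real^3^3) set" where
  "GLp3 = {F. det F > 0}"

definition SO3 :: "(real^3^3) set" where
  "SO3 = {Q. orthogonal_matrix Q \<and> det Q = 1}"

definition dyad :: "real^3 \<Rightarrow> real^3^3" where
  "dyad w = (\<chi> i j. w $ i * w $ j)"

text \<open>The uniaxial profile g(y) = W(I + (y-1) omega (x) omega) for the (density-normalised)
  strain energy W with W(I) = 1, evaluated at the fixed unit vector omega = e_1.\<close>
definition uniaxial :: "(real^3^3 \<Rightarrow> real) \<Rightarrow> real \<Rightarrow> real" where
  "uniaxial W y = W (mat 1 + (y - 1) *\<^sub>R dyad (axis 1 1))"

end

theory Submission
  imports Defs
begin

locale ode_setup =
  fixes g :: "real \<Rightarrow> real" and a M :: real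
  assumes g1: "g 1 = 1" and d1_1: "deriv g 1 = -1/3"
  and dg: "\<And>y. y > 0 \<Longrightarrow> (g has_real_derivative deriv g y) (at y)"
  and dg1: "\<And>y. y > 0 \<Longrightarrow> (deriv g has_real_derivative deriv (deriv g) y) (at y)"
  and dg2: "\<And>y. y > 0 \<Longrightarrow> (deriv (deriv g) has_real_derivative deriv (deriv (deriv g)) y) (at y)"
  and a_def: "a = deriv (deriv g) 1"
  and Mb: "\<And>y. y \<in> {1/2..3/2} \<Longrightarrow> \<bar>deriv (deriv (deriv g)) y\<bar> \<le> M"
  and aM: "a \<ge> 50 * (50 + M)"
begin

definition "d1 = deriv g"
definition "d2 = deriv d1"
definition "d3 = deriv d2"

lemma D0: "y > 0 \<Longrightarrow> (g has_real_derivative d1 y) (at y)"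
  using dg d1_def by auto
lemma D1: "y > 0 \<Longrightarrow> (d1 has_real_derivative d2 y) (at y)"
  using dg1 d1_def d2_def by auto
lemma D2: "y > 0 \<Longrightarrow> (d2 has_real_derivative d3 y) (at y)"
  using dg2 d1_def d2_def d3_def by auto
lemma M_bound: "y \<in> {1/2..3/2} \<Longrightarrow> \<bar>d3 y\<bar> \<le> M"
  using Mb d1_def d2_def d3_def by auto
lemma M_nonneg: "M \<ge> 0"
  using M_bound[of 1] by auto
lemma a_big: "a \<ge> 2500" using aM M_nonneg by (simp add: algebra_simps)
lemma M_small: "M \<le> a / 50" using aM M_nonneg by (simp add: algebra_simps)
lemma inv_a: "1/a \<le> 1/2500" "0 < 1/a" "a > 0" using a_big by (auto simp: divide_simps)
lemma a_eq: "d2 1 = a" using a_def d1_def d2_def by simp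
lemma d1_at1: "d1 1 = -1/3" using d1_1 d1_def by simp

lemma d2_close: assumes "\<bar>t\<bar> \<le> 1/2" shows "\<bar>d2 (1+t) - a\<bar> \<le> M * \<bar>t\<bar>"
proof -
  let ?S = "{min 1 (1+t) .. max 1 (1+t)}"
  have sub: "?S \<subseteq> {1/2..3/2}" using assms by (auto simp: abs_if split: if_splits)
  have "norm (d2 (1+t) - d2 1) \<le> M * norm ((1+t) - 1)"
  proof (rule field_differentiable_bound[where f'=d3])
    show "convex ?S" by simp
    fix z assume z: "z \<in> ?S"
    then have "z > 0" using sub by force
    then show "(d2 has_field_derivative d3 z) (at z within ?S)"
      using D2 has_field_derivative_at_within by blast
    show "norm (d3 z) \<le> M" using M_bound z sub by auto
  qed auto
  then show ?thesis using a_eq by simp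
qed

lemma d1_close: assumes "\<bar>t\<bar> \<le> 1/2" shows "\<bar>d1 (1+t) + 1/3 - a * t\<bar> \<le> M * t^2"
proof -
  let ?S = "{min 0 t .. max 0 t}"
  define f where "f = (\<lambda>s. d1 (1+s) - a * s)"
  define B where "B = M * abs t"
  have "norm (f t - f 0) \<le> B * norm (t - 0)"
  proof (rule field_differentiable_bound[where f'="\<lambda>s. d2 (1+s) - a"])
    show "convex ?S" by simp
    fix z assume z: "z \<in> ?S"
    then have zb: "\<bar>z\<bar> \<le> \<bar>t\<bar>" by auto
    then have "1 + z > 0" using assms by auto
    then have "((\<lambda>s. d1 (1+s)) has_real_derivative d2 (1+z) * 1) (at z)"
      by (intro DERIV_chain2[where f=d1 and g="\<lambda>s. 1+s"] D1) (auto intro!: derivative_eq_intros)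
    then have "(f has_real_derivative d2 (1+z) - a) (at z)"
      unfolding f_def by (auto intro!: derivative_eq_intros)
    then show "(f has_field_derivative d2 (1+z) - a) (at z within ?S)"
      using has_field_derivative_at_within by blast
    have "\<bar>d2 (1+z) - a\<bar> \<le> M * \<bar>z\<bar>" using d2_close zb assms by auto
    also have "\<dots> \<le> M * \<bar>t\<bar>" using zb M_nonneg by (simp add: mult_left_mono)
    finally show "norm (d2 (1+z) - a) \<le> B" by (simp add: B_def)
  qed auto
  then show ?thesis using d1_at1 M_nonneg by (simp add: f_def B_def power2_eq_square abs_mult)
qed

lemma shiftD: assumes "(f has_real_derivative D) (at (1+z))" shows "((\<lambda>s. f (1+s)) has_real_derivative D) (at z)"
proof -
  have "((\<lambda>s. 1 + s) has_real_derivative 1) (at z)" by (auto intro!: derivative_eq_intros)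
  from DERIV_chain2[OF assms this] show ?thesis by simp
qed

lemma d2_small: assumes "\<bar>v\<bar> \<le> 1/a" shows "a - 1 \<le> d2 (1+v)" "d2 (1+v) \<le> a + 1"
proof -
  have "\<bar>v\<bar> \<le> 1/2" using assms a_big by (smt (verit) divide_le_eq_1_pos frac_le)
  then have "\<bar>d2 (1+v) - a\<bar> \<le> M * \<bar>v\<bar>" by (rule d2_close)
  also have "\<dots> \<le> (a/50) * (1/a)" using assms M_small M_nonneg by (intro mult_mono) auto
  also have "\<dots> \<le> 1" using a_big by simp
  finally show "a - 1 \<le> d2 (1+v)" "d2 (1+v) \<le> a + 1" by auto
qed

definition "A v = 1 / d2 (1+v)"
definition "Q v = 3 * v * d2 (1+v) - (3 - v) * d1 (1+v) - g (1+v)"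

lemma Q0: "Q 0 = 0" unfolding Q_def using g1 d1_at1 by simp

lemma small_half: "\<bar>v\<bar> \<le> 1/a \<Longrightarrow> \<bar>v\<bar> \<le> 1/2 \<and> 1 + v > 0"
proof -
  assume "\<bar>v\<bar> \<le> 1/a"
  moreover have "1/a \<le> 1/2" using a_big by simp
  ultimately show ?thesis by auto
qed

lemma A_pos: "\<bar>v\<bar> \<le> 1/a \<Longrightarrow> 1/(a+1) \<le> A v \<and> A v \<le> 1/(a-1) \<and> A v > 0"
  using d2_small[of v] a_big unfolding A_def by (auto simp: frac_le)

lemma A_deriv: assumes "\<bar>w\<bar> \<le> 1/a"
  shows "(A has_real_derivative - d3 (1+w) / (d2 (1+w))^2) (at w)"
proof -
  have p: "1 + w > 0" using small_half assms by auto
  have nz: "d2 (1+w) \<noteq> 0" using d2_small[OF assms] a_big by auto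
  have "((\<lambda>s. d2 (1+s)) has_real_derivative d3 (1+w)) (at w)" using shiftD D2 p by blast
  then have "((\<lambda>s. 1 / d2 (1+s)) has_real_derivative - d3 (1+w) / (d2 (1+w))^2) (at w)"
    using nz by (auto intro!: derivative_eq_intros simp: power2_eq_square)
  then show ?thesis unfolding A_def[abs_def] by simp
qed

lemma Q_deriv: assumes "\<bar>w\<bar> \<le> 1/a"
  shows "(Q has_real_derivative w * d2 (1+w) + 3 * w * d3 (1+w)) (at w)"
proof -
  have p: "1 + w > 0" using small_half assms by auto
  have h0: "((\<lambda>s. g (1+s)) has_real_derivative d1 (1+w)) (at w)" using shiftD D0 p by blast
  have h1: "((\<lambda>s. d1 (1+s)) has_real_derivative d2 (1+w)) (at w)" using shiftD D1 p by blast
  have h2: "((\<lambda>s. d2 (1+s)) has_real_derivative d3 (1+w)) (at w)" using shiftD D2 p by blast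
  have "((\<lambda>v. 3 * v * d2 (1+v) - (3 - v) * d1 (1+v) - g (1+v)) has_real_derivative
      3 * d2 (1+w) + 3 * w * d3 (1+w) - (- d1 (1+w) + (3 - w) * d2 (1+w)) - d1 (1+w)) (at w)"
    by (auto intro!: derivative_eq_intros h0 h1 h2)
  then show ?thesis unfolding Q_def[abs_def] by (simp add: algebra_simps)
qed

lemma A'_bound: assumes zb: "\<bar>z\<bar> \<le> 1/a" shows "\<bar>- d3 (1+z) / (d2 (1+z))^2\<bar> \<le> 1/a"
proof -
    have "1+z \<in> {1/2..3/2}" using small_half[OF zb] by auto
    then have d3b: "\<bar>d3 (1+z)\<bar> \<le> a/50" using M_bound[of "1+z"] M_small by linarith
    have d2b: "a - 1 \<le> d2 (1+z)" using d2_small[OF zb] by auto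
    have "(a-1)^2 \<le> (d2 (1+z))^2" using d2b a_big by (intro power_mono) auto
    then have "\<bar>d3 (1+z)\<bar> / (d2 (1+z))^2 \<le> (a/50) / (a-1)^2"
      using d3b a_big by (intro frac_le) auto
    also have "\<dots> \<le> 1/a"
    proof -
      have "(a/2)*(a/2) \<le> (a-1)*(a-1)" using a_big by (intro mult_mono) auto
      moreover have "0 \<le> (a-1)*(a-1)" by simp
      ultimately have "a*a/50 \<le> (a-1)*(a-1)" by linarith
      then have "a * (a/50) \<le> (a-1)^2" by (simp add: power2_eq_square)
      then show ?thesis using a_big by (simp add: divide_simps)
    qed
    finally show ?thesis by (simp add: abs_divide)
qed

lemma A_lip: assumes "\<bar>v1\<bar> \<le> 1/a" "\<bar>v2\<bar> \<le> 1/a" shows "\<bar>A v1 - A v2\<bar> \<le> \<bar>v1 - v2\<bar> / a"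
proof -
  let ?S = "{min v1 v2 .. max v1 v2}"
  have "norm (A v1 - A v2) \<le> (1/a) * norm (v1 - v2)"
  proof (rule field_differentiable_bound[where f'="\<lambda>w. - d3 (1+w) / (d2 (1+w))^2"])
    fix z assume z: "z \<in> ?S"
    then have zb: "\<bar>z\<bar> \<le> 1/a" using assms by auto
    show "(A has_field_derivative - d3 (1+z) / (d2 (1+z))^2) (at z within ?S)"
      using A_deriv[OF zb] has_field_derivative_at_within by blast
    show "norm (- d3 (1+z) / (d2 (1+z))^2) \<le> 1/a" using A'_bound[OF zb] by simp
  qed auto
  then show ?thesis by simp
qed

lemma Q'_bound: assumes "\<bar>w\<bar> \<le> 1/a" shows "\<bar>w * d2 (1+w) + 3 * w * d3 (1+w)\<bar> \<le> 2 * a * \<bar>w\<bar>"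
proof -
  have "1+w \<in> {1/2..3/2}" using small_half[OF assms] by auto
  then have d3b: "\<bar>d3 (1+w)\<bar> \<le> a/50" using M_bound[of "1+w"] M_small by linarith
  have d2b: "\<bar>d2 (1+w)\<bar> \<le> a + 1" using d2_small[OF assms] a_big by auto
  have "\<bar>w * d2 (1+w) + 3 * w * d3 (1+w)\<bar> \<le> \<bar>w\<bar> * \<bar>d2 (1+w)\<bar> + 3 * (\<bar>w\<bar> * \<bar>d3 (1+w)\<bar>)"
    using abs_triangle_ineq[of "w * d2 (1+w)" "3 * w * d3 (1+w)"] by (simp add: abs_mult)
  also have "\<dots> \<le> \<bar>w\<bar> * (a+1) + 3 * (\<bar>w\<bar> * (a/50))"
    using d2b d3b by (intro add_mono mult_left_mono) auto
  also have "\<dots> = \<bar>w\<bar> * (a + 1 + 3 * (a/50))" by (simp add: algebra_simps)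
  also have "\<dots> \<le> \<bar>w\<bar> * (2 * a)" using a_big by (intro mult_left_mono) auto
  also have "\<dots> = 2 * a * \<bar>w\<bar>" by simp
  finally show ?thesis .
qed

lemma Q_bound: assumes "\<bar>w\<bar> \<le> 1/a" shows "\<bar>Q w\<bar> \<le> 2 * a * w^2"
proof -
  let ?S = "{min 0 w .. max 0 w}"
  have "norm (Q w - Q 0) \<le> (2 * a * \<bar>w\<bar>) * norm (w - 0)"
  proof (rule field_differentiable_bound[where f'="\<lambda>w. w * d2 (1+w) + 3 * w * d3 (1+w)"])
    fix z assume z: "z \<in> ?S"
    then have zb: "\<bar>z\<bar> \<le> \<bar>w\<bar>" by auto
    then have zb': "\<bar>z\<bar> \<le> 1/a" using assms by auto
    show "(Q has_field_derivative z * d2 (1+z) + 3 * z * d3 (1+z)) (at z within ?S)"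
      using Q_deriv[OF zb'] has_field_derivative_at_within by blast
    have "norm (z * d2 (1+z) + 3 * z * d3 (1+z)) \<le> 2 * a * \<bar>z\<bar>" using Q'_bound[OF zb'] by simp
    also have "\<dots> \<le> 2 * a * \<bar>w\<bar>" using zb a_big by (intro mult_left_mono) auto
    finally show "norm (z * d2 (1+z) + 3 * z * d3 (1+z)) \<le> 2 * a * \<bar>w\<bar>" .
  qed auto
  then show ?thesis using Q0 by (simp add: power2_eq_square abs_mult)
qed

lemma QA_lip: assumes "\<bar>v1\<bar> \<le> s" "\<bar>v2\<bar> \<le> s" "s \<le> 1/a"
  shows "\<bar>Q v1 * A v1 - Q v2 * A v2\<bar> \<le> 3 * s * \<bar>v1 - v2\<bar>"
proof -
  let ?S = "{min v1 v2 .. max v1 v2}"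
  let ?D = "\<lambda>w. (w * d2 (1+w) + 3 * w * d3 (1+w)) * A w + (- d3 (1+w) / (d2 (1+w))^2) * Q w"
  have "norm ((\<lambda>w. Q w * A w) v1 - (\<lambda>w. Q w * A w) v2) \<le> (3 * s) * norm (v1 - v2)"
  proof (rule field_differentiable_bound[where f'="?D"])
    fix z assume z: "z \<in> ?S"
    then have zs: "\<bar>z\<bar> \<le> s" using assms by auto
    then have zb: "\<bar>z\<bar> \<le> 1/a" using assms by auto
    show "((\<lambda>w. Q w * A w) has_field_derivative ?D z) (at z within ?S)"
      by (rule has_field_derivative_at_within[OF DERIV_mult[OF Q_deriv[OF zb] A_deriv[OF zb]]])
    have h1: "\<bar>z * d2 (1+z) + 3 * z * d3 (1+z)\<bar> \<le> 2 * a * \<bar>z\<bar>" by (rule Q'_bound[OF zb])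
    have h2: "\<bar>A z\<bar> \<le> 1/(a-1)" using A_pos[OF zb] by auto
    have h3: "\<bar>Q z\<bar> \<le> 2 * a * z^2" by (rule Q_bound[OF zb])
    have h4: "\<bar>- d3 (1+z) / (d2 (1+z))^2\<bar> \<le> 1/a" by (rule A'_bound[OF zb])
    have "\<bar>?D z\<bar> \<le> \<bar>z * d2 (1+z) + 3 * z * d3 (1+z)\<bar> * \<bar>A z\<bar> + \<bar>- d3 (1+z) / (d2 (1+z))^2\<bar> * \<bar>Q z\<bar>"
      by (metis (no_types, lifting) abs_mult abs_triangle_ineq)
    also have "\<dots> \<le> (2 * a * \<bar>z\<bar>) * (1/(a-1)) + (1/a) * (2 * a * z^2)"
      using a_big by (intro add_mono mult_mono h1 h2 h3 h4) auto
    also have "\<dots> = \<bar>z\<bar> * (2 * a / (a-1) + 2 * \<bar>z\<bar>)" using a_big by (simp add: field_simps power2_eq_square)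
    also have "\<dots> \<le> s * 3"
    proof (rule mult_mono)
      have "2 * a / (a-1) \<le> 2.5" using a_big by (simp add: divide_simps)
      moreover have "2 * \<bar>z\<bar> \<le> 1/2" using zb inv_a by linarith
      ultimately show "2 * a / (a-1) + 2 * \<bar>z\<bar> \<le> 3" by linarith
    qed (use zs a_big in auto)
    finally show "norm (?D z) \<le> 3 * s" by (simp add: mult.commute)
  qed auto
  then show ?thesis by simp
qed

end

definition avg :: "(real \<Rightarrow> real) \<Rightarrow> real \<Rightarrow> real" where
  "avg K R = (if R = 0 then K 0 / 5 else integral {0..R} (\<lambda>r. r^4 * K r) / R^5)"

lemma r4_int: fixes R :: real assumes "0 \<le> R" shows "((\<lambda>r. r^4) has_integral R^5/5) {0..R}"
proof -
  have "((\<lambda>r::real. r^4) has_integral ((\<lambda>r. r^5/5) R - (\<lambda>r. r^5/5) 0)) {0..R}"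
    by (rule fundamental_theorem_of_calculus[OF assms])
       (auto intro!: derivative_eq_intros simp: has_real_derivative_iff_has_vector_derivative[symmetric])
  then show ?thesis by simp
qed

lemma int_r4K: fixes K :: "real \<Rightarrow> real" and R :: real assumes "continuous_on {0..R} K"
  shows "(\<lambda>r. r^4 * K r) integrable_on {0..R}"
  by (rule integrable_continuous_interval) (auto intro!: continuous_intros assms)

lemma avg_bounds:
  assumes K: "continuous_on {0..R} K" and R: "0 \<le> R"
    and b: "\<And>r. r \<in> {0..R} \<Longrightarrow> lo \<le> K r \<and> K r \<le> hi"
  shows "lo/5 \<le> avg K R \<and> avg K R \<le> hi/5"
proof (cases "R = 0")
  case True then show ?thesis using b[of 0] by (auto simp: avg_def)
next
  case False
  then have Rp: "R > 0" using R by auto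
  have i1: "(\<lambda>r. r^4 * K r) integrable_on {0..R}" by (rule int_r4K[OF K])
  have i2: "((\<lambda>r. r^4 * lo) has_integral R^5/5 * lo) {0..R}"
    using has_integral_mult_left[OF r4_int[OF R]] by simp
  have i3: "((\<lambda>r. r^4 * hi) has_integral R^5/5 * hi) {0..R}"
    using has_integral_mult_left[OF r4_int[OF R]] by simp
  have p1: "r^4 * lo \<le> r^4 * K r" if "r \<in> {0..R}" for r
    using b[OF that] by (intro mult_left_mono) auto
  have p2: "r^4 * K r \<le> r^4 * hi" if "r \<in> {0..R}" for r
    using b[OF that] by (intro mult_left_mono) auto
  have "R^5/5 * lo \<le> integral {0..R} (\<lambda>r. r^4 * K r)"
    using has_integral_le[OF i2 integrable_integral[OF i1]] p1 by blast
  moreover have "integral {0..R} (\<lambda>r. r^4 * K r) \<le> R^5/5 * hi"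
    using has_integral_le[OF integrable_integral[OF i1] i3] p2 by blast
  ultimately show ?thesis using Rp by (auto simp: avg_def divide_simps mult.commute)
qed

lemma avg_diff:
  assumes "continuous_on {0..R} K1" "continuous_on {0..R} K2"
  shows "avg K1 R - avg K2 R = avg (\<lambda>r. K1 r - K2 r) R"
proof -
  have "integral {0..R} (\<lambda>r. r^4 * (K1 r - K2 r)) = integral {0..R} (\<lambda>r. r^4 * K1 r) - integral {0..R} (\<lambda>r. r^4 * K2 r)"
    using integral_diff[OF int_r4K[OF assms(1)] int_r4K[OF assms(2)]] by (simp add: algebra_simps)
  then show ?thesis by (simp add: avg_def diff_divide_distrib)
qed

lemma avg_abs:
  assumes K: "continuous_on {0..R} K" and R: "0 \<le> R"
    and b: "\<And>r. r \<in> {0..R} \<Longrightarrow> \<bar>K r\<bar> \<le> B"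
  shows "\<bar>avg K R\<bar> \<le> B/5"
  using avg_bounds[OF K R, of "-B" B] b by (force simp: abs_le_iff)

lemma avg_cont: assumes K: "continuous_on {0..1} K" shows "continuous_on {0..1} (avg K)"
  unfolding continuous_on_eq_continuous_within
proof
  fix x :: real assume x: "x \<in> {0..1}"
  show "continuous (at x within {0..1}) (avg K)"
  proof (cases "x = 0")
    case True
    show ?thesis unfolding True continuous_within_eps_delta
    proof (intro allI impI)
      fix e :: real assume e: "e > 0"
      have "continuous (at 0 within {0..1}) K" using K by (simp add: continuous_on_eq_continuous_within)
      then obtain d where d: "d > 0" "\<And>r. r \<in> {0..1} \<Longrightarrow> dist r 0 < d \<Longrightarrow> dist (K r) (K 0) < e"
        unfolding continuous_within_eps_delta using e by metis
      have "\<forall>x'\<in>{0..1}. dist x' 0 < d \<longrightarrow> dist (avg K x') (avg K 0) < e"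
      proof (intro ballI impI)
        fix x' :: real assume x': "x' \<in> {0..1}" "dist x' 0 < d"
        have b: "K 0 - e \<le> K r \<and> K r \<le> K 0 + e" if "r \<in> {0..x'}" for r
          using d(2)[of r] that x' by (auto simp: dist_real_def)
        have "continuous_on {0..x'} K" using K x' by (auto intro: continuous_on_subset)
        from avg_bounds[OF this _ b] x' have "(K 0 - e)/5 \<le> avg K x' \<and> avg K x' \<le> (K 0 + e)/5" by auto
        then show "dist (avg K x') (avg K 0) < e" using e by (auto simp: avg_def dist_real_def)
      qed
      then show "\<exists>d>0. \<forall>x'\<in>{0..1}. dist x' 0 < d \<longrightarrow> dist (avg K x') (avg K 0) < e" using d(1) by blast
    qed
  next
    case False
    then have xp: "x > 0" using x by auto
    let ?I = "\<lambda>r. integral {0..r} (\<lambda>r. r^4 * K r)"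
    have "continuous_on {0..1} ?I"
      by (rule indefinite_integral_continuous_1[OF int_r4K[OF K]])
    then have "(?I \<longlongrightarrow> ?I x) (at x within {0..1})" using x
      by (simp add: continuous_on_eq_continuous_within continuous_within)
    moreover have "((\<lambda>r. r^5) \<longlongrightarrow> x^5) (at x within {0..1})" by (intro tendsto_intros)
    ultimately have "((\<lambda>r. ?I r / r^5) \<longlongrightarrow> ?I x / x^5) (at x within {0..1})"
      using xp by (intro tendsto_divide) auto
    then have c: "continuous (at x within {0..1}) (\<lambda>r. ?I r / r^5)" by (simp add: continuous_within)
    show ?thesis
      by (rule continuous_transform_within[OF c xp x]) (auto simp: avg_def dist_real_def)
  qed
qed

lemma avg_deriv: assumes K: "continuous_on {0..1} K" and R: "R \<in> {0..1}"
  shows "((\<lambda>r. r^2 * avg K r) has_real_derivative R * (K R - 3 * avg K R)) (at R within {0..1})"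
proof (cases "R = 0")
  case True
  have "continuous (at 0 within {0..1}) (avg K)"
    using avg_cont[OF K] by (simp add: continuous_on_eq_continuous_within)
  then have "(avg K \<longlongrightarrow> avg K 0) (at 0 within {0..1})" by (simp add: continuous_within)
  then have t: "((\<lambda>y. y * avg K y) \<longlongrightarrow> 0 * avg K 0) (at 0 within {0..1})"
    by (intro tendsto_intros)
  have ev: "\<forall>\<^sub>F y in at 0 within {0..1}. y * avg K y = (y^2 * avg K y - 0^2 * avg K 0) / (y - 0)"
    by (auto simp: eventually_at_filter power2_eq_square)
  have "((\<lambda>y. (y^2 * avg K y - 0^2 * avg K 0) / (y - 0)) \<longlongrightarrow> 0) (at 0 within {0..1})"
    using tendsto_cong[OF ev] t by simp
  then show ?thesis unfolding True by (simp add: has_field_derivative_iff)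
next
  case False
  then have Rp: "R > 0" using R by auto
  let ?I = "\<lambda>r. integral {0..r} (\<lambda>r. r^4 * K r)"
  have cK: "continuous_on {0..1} (\<lambda>r. r^4 * K r)" by (intro continuous_intros K)
  have dI: "(?I has_real_derivative R^4 * K R) (at R within {0..1})"
    by (rule integral_has_real_derivative[OF cK R])
  have "((\<lambda>r. ?I r / r^3) has_real_derivative (R^4 * K R * R^3 - ?I R * (3 * R^2)) / (R^3 * R^3)) (at R within {0..1})"
    using Rp by (auto intro!: derivative_eq_intros dI)
  moreover have "(R^4 * K R * R^3 - ?I R * (3 * R^2)) / (R^3 * R^3) = R * (K R - 3 * avg K R)"
    using Rp by (simp add: avg_def field_simps power_add[symmetric] eval_nat_numeral)
  ultimately have d: "((\<lambda>r. ?I r / r^3) has_real_derivative R * (K R - 3 * avg K R)) (at R within {0..1})" by simp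
  show ?thesis
  proof (rule has_field_derivative_transform_within[OF d Rp R])
    fix x assume "x \<in> {0..1}" "dist x R < R"
    then have "x > 0" by (auto simp: dist_real_def)
    then show "?I x / x^3 = x^2 * avg K x" by (simp add: avg_def field_simps eval_nat_numeral)
  qed
qed


lemma int_bound:
  fixes w :: "real \<Rightarrow> real"
  assumes w: "continuous_on {0..1} w" and b: "\<And>s. s \<in> {0..1} \<Longrightarrow> \<bar>w s\<bar> \<le> D" and r: "r \<in> {0..1}"
  shows "\<bar>integral {0..r} (\<lambda>s. s * w s)\<bar> \<le> D"
proof -
  have D0: "D \<ge> 0" using b[of 0] by auto
  have cw: "continuous_on {0..r} (\<lambda>s. s * w s)" using w r by (auto intro!: continuous_intros intro: continuous_on_subset)
  have "norm (integral {0..r} (\<lambda>s. s * w s)) \<le> integral {0..r} (\<lambda>_. D)"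
  proof (rule integral_norm_bound_integral)
    show "(\<lambda>s. s * w s) integrable_on {0..r}" by (rule integrable_continuous_interval[OF cw])
    show "(\<lambda>_. D) integrable_on {0..r}" by (rule integrable_continuous_interval) (rule continuous_on_const)
    fix s assume s: "s \<in> {0..r}"
    then have "s \<in> {0..1}" using r by auto
    then have "\<bar>s\<bar> * \<bar>w s\<bar> \<le> 1 * D" using b by (intro mult_mono) auto
    then show "norm (s * w s) \<le> D" by (simp add: abs_mult)
  qed
  also have "\<dots> = r * D" using r by simp
  also have "\<dots> \<le> D" using r D0 by (simp add: mult_left_le_one_le)
  finally show ?thesis by simp
qed

lemma exp_lip: fixes x y :: real assumes "\<bar>x\<bar> \<le> 1/2" "\<bar>y\<bar> \<le> 1/2" shows "\<bar>exp x - exp y\<bar> \<le> 2 * \<bar>x - y\<bar>"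
proof -
  let ?S = "{min x y .. max x y}"
  have "norm (exp x - exp y) \<le> 2 * norm (x - y)"
  proof (rule field_differentiable_bound[where f'=exp])
    fix z assume z: "z \<in> ?S"
    then have "\<bar>z\<bar> \<le> 1/2" using assms by auto
    then have "norm (exp z) \<le> 1 + 2 * norm z" using exp_bound_lemma[of z] by simp
    also have "\<dots> \<le> 2" using \<open>\<bar>z\<bar> \<le> 1/2\<close> by simp
    finally show "norm (exp z) \<le> 2" .
    show "(exp has_field_derivative exp z) (at z within ?S)" by (rule has_field_derivative_at_within[OF DERIV_exp])
  qed auto
  then show ?thesis by simp
qed

definition E :: "(real \<Rightarrow> real) \<Rightarrow> real \<Rightarrow> real" where
  "E z r = integral {0..r} (\<lambda>s. s * z s) - integral {0..1} (\<lambda>s. s * z s)"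

lemma E_cont: assumes "continuous_on {0..1} z" shows "continuous_on {0..1} (E z)"
proof -
  have "(\<lambda>s. s * z s) integrable_on {0..1}"
    by (rule integrable_continuous_interval) (auto intro!: continuous_intros assms)
  from indefinite_integral_continuous_1[OF this] show ?thesis
    unfolding E_def[abs_def] by (intro continuous_intros)
qed

lemma E_bound: assumes "continuous_on {0..1} z" "\<And>s. s \<in> {0..1} \<Longrightarrow> \<bar>z s\<bar> \<le> D" "r \<in> {0..1}"
  shows "\<bar>E z r\<bar> \<le> 2 * D"
  using int_bound[OF assms] int_bound[OF assms(1,2), of 1] unfolding E_def by auto

lemma E_diff: assumes "continuous_on {0..1} z1" "continuous_on {0..1} z2" "r \<in> {0..1}"
  shows "E z1 r - E z2 r = E (\<lambda>s. z1 s - z2 s) r"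
proof -
  have i: "(\<lambda>s. s * z s) integrable_on {0..t}" if "continuous_on {0..1} z" "t \<in> {0..1}" for z :: "real \<Rightarrow> real" and t :: real
    by (rule integrable_continuous_interval) (use that in \<open>auto intro!: continuous_intros intro: continuous_on_subset\<close>)
  have e: "integral {0..t} (\<lambda>s. s * (z1 s - z2 s)) = integral {0..t} (\<lambda>s. s * z1 s) - integral {0..t} (\<lambda>s. s * z2 s)"
    if "t \<in> {0..1}" for t
    using integral_diff[OF i[OF assms(1) that] i[OF assms(2) that]] by (simp add: algebra_simps)
  show ?thesis unfolding E_def using e[OF assms(3)] e[of 1] by simp
qed

context ode_setup begin

definition "Pf z r = (if r = 0 then 0 else Q (r^2 * z r) * A (r^2 * z r) / r^2)"
definition "Kf c m z r = (c + m * exp (3 * E z r)) * A (r^2 * z r) + Pf z r"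

lemma A_cont: "continuous_on {-1/a..1/a} A"
  by (intro continuous_at_imp_continuous_on ballI DERIV_isCont[OF A_deriv]) auto

lemma QA_cont: "continuous_on {-1/a..1/a} (\<lambda>w. Q w * A w)"
  by (intro continuous_at_imp_continuous_on ballI continuous_intros DERIV_isCont[OF A_deriv] DERIV_isCont[OF Q_deriv]) auto

lemma v_small: assumes "\<And>s. s \<in> {0..1} \<Longrightarrow> \<bar>z s\<bar> \<le> 1/a" "r \<in> {0..1}"
  shows "\<bar>r^2 * z r\<bar> \<le> r^2 * (1/a)" "\<bar>r^2 * z r\<bar> \<le> 1/a"
proof -
  have "r^2 * \<bar>z r\<bar> \<le> r^2 * (1/a)" using assms by (intro mult_left_mono) auto
  then show "\<bar>r^2 * z r\<bar> \<le> r^2 * (1/a)" by (simp add: abs_mult)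
  also have "\<dots> \<le> 1 * (1/a)" using assms inv_a by (intro mult_right_mono) (auto simp: power_le_one)
  finally show "\<bar>r^2 * z r\<bar> \<le> 1/a" by simp
qed

lemma v_cont: assumes "continuous_on {0..1} z" "\<And>s. s \<in> {0..1} \<Longrightarrow> \<bar>z s\<bar> \<le> 1/a"
  shows "continuous_on {0..1} (\<lambda>r. A (r^2 * z r))" "continuous_on {0..1} (\<lambda>r. Q (r^2 * z r) * A (r^2 * z r))"
proof -
  have c: "continuous_on {0..1} (\<lambda>r. r^2 * z r)" by (intro continuous_intros assms)
  have im: "(\<lambda>r. r^2 * z r) ` {0..1} \<subseteq> {-1/a..1/a}" using v_small[OF assms(2)] by (force simp: abs_le_iff)
  show "continuous_on {0..1} (\<lambda>r. A (r^2 * z r))" by (rule continuous_on_compose2[OF A_cont c im])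
  show "continuous_on {0..1} (\<lambda>r. Q (r^2 * z r) * A (r^2 * z r))"
    by (rule continuous_on_compose2[OF QA_cont c im])
qed

lemma Pf_bound: assumes "\<And>s. s \<in> {0..1} \<Longrightarrow> \<bar>z s\<bar> \<le> 1/a" "r \<in> {0..1}"
  shows "\<bar>Pf z r\<bar> \<le> 3 * r^2 * (1/a)^2"
proof (cases "r = 0")
  case True then show ?thesis by (simp add: Pf_def)
next
  case False
  then have rp: "r^2 > 0" by simp
  have v1: "\<bar>r^2 * z r\<bar> \<le> r^2 * (1/a)" by (rule v_small(1)[OF assms(1) assms(2)])
  have "r^2 \<le> 1" using assms(2) by (simp add: power_le_one)
  then have v2: "r^2 * (1/a) \<le> 1 * (1/a)" using inv_a by (intro mult_right_mono) auto
  then have v2: "r^2 * (1/a) \<le> 1/a" by simp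
  have "\<bar>Q (r^2 * z r) * A (r^2 * z r) - Q 0 * A 0\<bar> \<le> 3 * (r^2 * (1/a)) * \<bar>r^2 * z r - 0\<bar>"
    by (rule QA_lip) (use v1 v2 inv_a in auto)
  also have "\<dots> \<le> 3 * (r^2 * (1/a)) * (r^2 * (1/a))" using v1 inv_a by (intro mult_left_mono) auto
  finally have "\<bar>Q (r^2 * z r) * A (r^2 * z r)\<bar> \<le> 3 * (r^2 * (1/a)) * (r^2 * (1/a))" using Q0 by simp
  then show ?thesis using False rp inv_a by (simp add: Pf_def abs_divide divide_simps power2_eq_square)
qed

lemma Pf_cont: assumes z: "continuous_on {0..1} z" and zb: "\<And>s. s \<in> {0..1} \<Longrightarrow> \<bar>z s\<bar> \<le> 1/a"
  shows "continuous_on {0..1} (Pf z)"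
  unfolding continuous_on_eq_continuous_within
proof
  fix x :: real assume x: "x \<in> {0..1}"
  show "continuous (at x within {0..1}) (Pf z)"
  proof (cases "x = 0")
    case True
    show ?thesis unfolding True continuous_within_eps_delta
    proof (intro allI impI)
      fix e :: real assume e: "e > 0"
      have "\<forall>x'\<in>{0..1}. dist x' 0 < e/3 \<longrightarrow> dist (Pf z x') (Pf z 0) < e"
      proof (intro ballI impI)
        fix x' :: real assume x': "x' \<in> {0..1}" "dist x' 0 < e/3"
        have "\<bar>Pf z x'\<bar> \<le> 3 * x'^2 * (1/a)^2" by (rule Pf_bound[OF zb x'(1)])
        also have "\<dots> \<le> 3 * x' * 1"
        proof -
          have "x'^2 \<le> x'" using x' by (simp add: power2_eq_square mult_left_le_one_le)
          moreover have "(1/a)^2 \<le> 1" using inv_a by (simp add: power_le_one)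
          ultimately show ?thesis using x' by (intro mult_mono) auto
        qed
        also have "\<dots> < e" using x' by (auto simp: dist_real_def)
        finally show "dist (Pf z x') (Pf z 0) < e" by (simp add: Pf_def dist_real_def)
      qed
      then show "\<exists>d>0. \<forall>x'\<in>{0..1}. dist x' 0 < d \<longrightarrow> dist (Pf z x') (Pf z 0) < e" using e
        by (intro exI[of _ "e/3"]) auto
    qed
  next
    case False
    then have xp: "x > 0" using x by auto
    have "continuous (at x within {0..1}) (\<lambda>r. Q (r^2 * z r) * A (r^2 * z r))"
      using v_cont(2)[OF z zb] x by (simp add: continuous_on_eq_continuous_within)
    then have "((\<lambda>r. Q (r^2 * z r) * A (r^2 * z r)) \<longlongrightarrow> Q (x^2 * z x) * A (x^2 * z x)) (at x within {0..1})"
      by (simp add: continuous_within)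
    moreover have "((\<lambda>r. r^2) \<longlongrightarrow> x^2) (at x within {0..1})" by (intro tendsto_intros)
    ultimately have "((\<lambda>r. Q (r^2 * z r) * A (r^2 * z r) / r^2) \<longlongrightarrow> Q (x^2 * z x) * A (x^2 * z x) / x^2) (at x within {0..1})"
      using xp by (intro tendsto_divide) auto
    then have c: "continuous (at x within {0..1}) (\<lambda>r. Q (r^2 * z r) * A (r^2 * z r) / r^2)" by (simp add: continuous_within)
    show ?thesis
      by (rule continuous_transform_within[OF c xp x]) (auto simp: Pf_def dist_real_def)
  qed
qed

lemma Kf_cont: assumes z: "continuous_on {0..1} z" and zb: "\<And>s. s \<in> {0..1} \<Longrightarrow> \<bar>z s\<bar> \<le> 1/a"
  shows "continuous_on {0..1} (Kf c m z)"
  unfolding Kf_def[abs_def]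
  by (intro continuous_intros E_cont z v_cont[OF z zb] Pf_cont[OF z zb])

end

context ode_setup begin

definition "good z \<longleftrightarrow> continuous_on {0..1} z \<and> (\<forall>s\<in>{0..1}. \<bar>z s\<bar> \<le> 1/a)"

lemma goodD: "good z \<Longrightarrow> continuous_on {0..1} z" "good z \<Longrightarrow> s \<in> {0..1} \<Longrightarrow> \<bar>z s\<bar> \<le> 1/a"
  by (auto simp: good_def)

lemma L_bound: assumes "good z" "r \<in> {0..1}"
  shows "\<bar>3 * E z r\<bar> \<le> 1/2" "exp (3 * E z r) \<le> 2" "exp (3 * E z r) > 0"
proof -
  have "\<bar>E z r\<bar> \<le> 2 * (1/a)" using E_bound[OF goodD(1)[OF assms(1)] goodD(2)[OF assms(1)] assms(2)] by auto
  then have e: "\<bar>3 * E z r\<bar> \<le> 6/a" by simp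
  moreover have "6/a \<le> 1/2" using a_big by (simp add: divide_simps)
  ultimately show "\<bar>3 * E z r\<bar> \<le> 1/2" by linarith
  then have "norm (exp (3 * E z r)) \<le> 1 + 2 * norm (3 * E z r)" by (intro exp_bound_lemma) simp
  also have "\<dots> \<le> 2" using \<open>\<bar>3 * E z r\<bar> \<le> 1/2\<close> by simp
  finally show "exp (3 * E z r) \<le> 2" by simp
  show "exp (3 * E z r) > 0" by simp
qed

lemma Pf_bound': assumes "good z" "r \<in> {0..1}" shows "\<bar>Pf z r\<bar> \<le> 3 / a^2"
proof -
  have "\<bar>Pf z r\<bar> \<le> 3 * r^2 * (1/a)^2" by (rule Pf_bound[OF goodD(2)[OF assms(1)] assms(2)])
  also have "\<dots> \<le> 3 * 1 * (1/a)^2" using assms(2) by (intro mult_mono mult_left_mono) (auto simp: power_le_one)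
  finally show ?thesis by (simp add: power_divide)
qed

lemma Kf_bounds: assumes z: "good z" and r: "r \<in> {0..1}" and c: "c \<in> {1..3}" and m: "\<bar>m\<bar> \<le> 1/10"
  shows "(c - 2 * \<bar>m\<bar>) / (a+1) - 3 / a^2 \<le> Kf c m z r"
        "Kf c m z r \<le> (c + 2 * \<bar>m\<bar>) / (a-1) + 3 / a^2"
proof -
  let ?L = "exp (3 * E z r)"
  let ?v = "r^2 * z r"
  have L: "?L \<le> 2" "?L > 0" using L_bound[OF z r] by auto
  have "\<bar>m * ?L\<bar> \<le> \<bar>m\<bar> * 2" using L by (simp add: abs_mult mult_left_mono)
  then have cm: "c - 2 * \<bar>m\<bar> \<le> c + m * ?L" "c + m * ?L \<le> c + 2 * \<bar>m\<bar>" by (auto simp: abs_le_iff)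
  have cm0: "0 \<le> c - 2 * \<bar>m\<bar>" using c m by auto
  have vb: "\<bar>?v\<bar> \<le> 1/a" by (rule v_small(2)[OF goodD(2)[OF z] r])
  have A: "1/(a+1) \<le> A ?v" "A ?v \<le> 1/(a-1)" "A ?v > 0" using A_pos[OF vb] by auto
  have P: "\<bar>Pf z r\<bar> \<le> 3 / a^2" by (rule Pf_bound'[OF z r])
  have "(c - 2 * \<bar>m\<bar>) / (a+1) = (c - 2 * \<bar>m\<bar>) * (1/(a+1))" by simp
  also have "\<dots> \<le> (c + m * ?L) * A ?v" using cm cm0 A a_big by (intro mult_mono) auto
  finally have lo: "(c - 2 * \<bar>m\<bar>) / (a+1) \<le> (c + m * ?L) * A ?v" .
  have "(c + m * ?L) * A ?v \<le> (c + 2 * \<bar>m\<bar>) * (1/(a-1))" using cm cm0 A by (intro mult_mono) auto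
  then have hi: "(c + m * ?L) * A ?v \<le> (c + 2 * \<bar>m\<bar>) / (a-1)" by simp
  show "(c - 2 * \<bar>m\<bar>) / (a+1) - 3 / a^2 \<le> Kf c m z r" using lo P unfolding Kf_def by (simp add: abs_le_iff)
  show "Kf c m z r \<le> (c + 2 * \<bar>m\<bar>) / (a-1) + 3 / a^2" using hi P unfolding Kf_def by (simp add: abs_le_iff)
qed

lemma Kf_abs: assumes z: "good z" and r: "r \<in> {0..1}" and c: "c \<in> {1..3}" and m: "\<bar>m\<bar> \<le> 1/10"
  shows "\<bar>Kf c m z r\<bar> \<le> 5 / a"
proof -
  have h: "(c + 2 * \<bar>m\<bar>) / (a-1) \<le> 4 / a" 
  proof -
    have "(c + 2 * \<bar>m\<bar>) / (a-1) \<le> 3.2 / (a-1)" using c m a_big by (intro divide_right_mono) auto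
    also have "\<dots> \<le> 4 / a" using a_big by (simp add: divide_simps)
    finally show ?thesis .
  qed
  have h2: "3 / a^2 \<le> 1 / a" using a_big by (simp add: divide_simps power2_eq_square)
  have h3: "0 \<le> (c - 2 * \<bar>m\<bar>) / (a+1)" using c m a_big by auto
  show ?thesis using Kf_bounds[OF assms] h h2 h3 by (simp add: abs_le_iff)
qed

lemma diff_good: assumes "good z1" "good z2" shows "continuous_on {0..1} (\<lambda>s. z1 s - z2 s)"
  using goodD(1)[OF assms(1)] goodD(1)[OF assms(2)] by (intro continuous_intros)

lemma Kf_lip: assumes z1: "good z1" and z2: "good z2" and D: "\<And>s. s \<in> {0..1} \<Longrightarrow> \<bar>z1 s - z2 s\<bar> \<le> D"
  and r: "r \<in> {0..1}" and c: "c \<in> {1..3}" and m: "\<bar>m\<bar> \<le> 1/10"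
  shows "\<bar>Kf c m z1 r - Kf c m z2 r\<bar> \<le> 9 * D / a"
proof -
  have D0: "0 \<le> D" using D[of 0] by auto
  let ?L1 = "exp (3 * E z1 r)" and ?L2 = "exp (3 * E z2 r)"
  let ?v1 = "r^2 * z1 r" and ?v2 = "r^2 * z2 r"
  have L1: "?L1 \<le> 2" "\<bar>3 * E z1 r\<bar> \<le> 1/2" using L_bound[OF z1 r] by auto
  have L2: "?L2 \<le> 2" "?L2 > 0" "\<bar>3 * E z2 r\<bar> \<le> 1/2" using L_bound[OF z2 r] by auto
  have "\<bar>E z1 r - E z2 r\<bar> \<le> 2 * D"
    unfolding E_diff[OF goodD(1)[OF z1] goodD(1)[OF z2] r] by (rule E_bound[OF diff_good[OF z1 z2] D r])
  then have dL: "\<bar>?L1 - ?L2\<bar> \<le> 12 * D"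
    using exp_lip[OF L1(2) L2(3)] by (simp add: algebra_simps abs_mult_pos) (smt (verit) abs_mult)
  have vb1: "\<bar>?v1\<bar> \<le> r^2 * (1/a)" "\<bar>?v1\<bar> \<le> 1/a" using v_small[OF goodD(2)[OF z1] r] by auto
  have vb2: "\<bar>?v2\<bar> \<le> r^2 * (1/a)" "\<bar>?v2\<bar> \<le> 1/a" using v_small[OF goodD(2)[OF z2] r] by auto
  have r2: "r^2 \<le> 1" "0 \<le> r^2" using r by (auto simp: power_le_one)
  have dv: "\<bar>?v1 - ?v2\<bar> \<le> D"
  proof -
    have "\<bar>?v1 - ?v2\<bar> = r^2 * \<bar>z1 r - z2 r\<bar>" by (simp add: abs_mult flip: right_diff_distrib)
    also have "\<dots> \<le> 1 * D" using r2 D[OF r] D0 by (intro mult_mono) auto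
    finally show ?thesis by simp
  qed
  have dA: "\<bar>A ?v1 - A ?v2\<bar> \<le> D / a"
    using A_lip[OF vb1(2) vb2(2)] dv inv_a by (smt (verit) divide_right_mono)
  have A1: "0 < A ?v1" "A ?v1 \<le> 1/(a-1)" using A_pos[OF vb1(2)] by auto
  have dP: "\<bar>Pf z1 r - Pf z2 r\<bar> \<le> 3 * D / a"
  proof (cases "r = 0")
    case True then show ?thesis using D0 inv_a by (simp add: Pf_def)
  next
    case False
    then have rp: "r^2 > 0" by simp
    have s: "r^2 * (1/a) \<le> 1/a" using r2 inv_a mult_right_mono[of "r^2" 1 "1/a"] by simp
    have "\<bar>Q ?v1 * A ?v1 - Q ?v2 * A ?v2\<bar> \<le> 3 * (r^2 * (1/a)) * \<bar>?v1 - ?v2\<bar>"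
      by (rule QA_lip[OF vb1(1) vb2(1) s])
    also have "\<bar>?v1 - ?v2\<bar> = r^2 * \<bar>z1 r - z2 r\<bar>" by (simp add: abs_mult flip: right_diff_distrib)
    finally have h: "\<bar>Q ?v1 * A ?v1 - Q ?v2 * A ?v2\<bar> \<le> 3 * (r^2 * (1/a)) * (r^2 * \<bar>z1 r - z2 r\<bar>)" .
    have eq: "3 * (r^2 * (1/a)) * (r^2 * \<bar>z1 r - z2 r\<bar>) / r^2 = 3 * (1/a) * \<bar>z1 r - z2 r\<bar> * r^2"
      using rp by (simp add: field_simps power2_eq_square)
    have "\<bar>Q ?v1 * A ?v1 - Q ?v2 * A ?v2\<bar> / r^2 \<le> 3 * (r^2 * (1/a)) * (r^2 * \<bar>z1 r - z2 r\<bar>) / r^2"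
      using h rp by (intro divide_right_mono) auto
    then have "\<bar>Q ?v1 * A ?v1 - Q ?v2 * A ?v2\<bar> / r^2 \<le> 3 * (1/a) * \<bar>z1 r - z2 r\<bar> * r^2" using eq by simp
    also have "\<dots> \<le> 3 * (1/a) * D * 1" using D[OF r] r2 inv_a D0 by (intro mult_mono) auto
    finally show ?thesis using False by (simp add: Pf_def diff_divide_distrib[symmetric])
  qed
  have eq: "Kf c m z1 r - Kf c m z2 r = c * (A ?v1 - A ?v2) + m * ((?L1 - ?L2) * A ?v1 + ?L2 * (A ?v1 - A ?v2)) + (Pf z1 r - Pf z2 r)"
    unfolding Kf_def by (simp add: algebra_simps)
  have "\<bar>c\<bar> * \<bar>A ?v1 - A ?v2\<bar> \<le> 3 * (D / a)" using c dA by (intro mult_mono) auto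
  then have t1: "\<bar>c * (A ?v1 - A ?v2)\<bar> \<le> 3 * (D / a)" by (simp only: abs_mult)
  have "\<bar>?L1 - ?L2\<bar> * \<bar>A ?v1\<bar> \<le> (12 * D) * (1/(a-1))" using dL A1 by (intro mult_mono) auto
  then have t2a: "\<bar>(?L1 - ?L2) * A ?v1\<bar> \<le> (12 * D) * (1/(a-1))" by (simp only: abs_mult)
  have "\<bar>?L2\<bar> * \<bar>A ?v1 - A ?v2\<bar> \<le> 2 * (D / a)" using L2 dA by (intro mult_mono) auto
  then have t2b: "\<bar>?L2 * (A ?v1 - A ?v2)\<bar> \<le> 2 * (D / a)" by (simp only: abs_mult)
  have h: "D * (12*a) \<le> D * (13*(a-1))" using a_big D0 by (intro mult_left_mono) auto
  have h': "12 * D * a \<le> 13 * D * (a-1)" using h by (simp add: algebra_simps)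
  have "12 * D * (1/(a-1)) \<le> 13 * D / a" using a_big h' by (simp add: divide_simps)
  then have h13: "(12 * D) * (1/(a-1)) \<le> 13 * D / a" by simp
  have e15: "13 * D / a + 2 * (D / a) = 15 * D / a" by (simp add: field_simps)
  have s1: "\<bar>(?L1 - ?L2) * A ?v1 + ?L2 * (A ?v1 - A ?v2)\<bar> \<le> \<bar>(?L1 - ?L2) * A ?v1\<bar> + \<bar>?L2 * (A ?v1 - A ?v2)\<bar>"
    by (rule abs_triangle_ineq)
  have s2: "\<bar>(?L1 - ?L2) * A ?v1 + ?L2 * (A ?v1 - A ?v2)\<bar> \<le> 15 * D / a"
    using s1 t2a t2b h13 e15 by linarith
  have "\<bar>m\<bar> * \<bar>(?L1 - ?L2) * A ?v1 + ?L2 * (A ?v1 - A ?v2)\<bar> \<le> (1/10) * (15 * D / a)"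
    using s2 m by (intro mult_mono) auto
  then have t2: "\<bar>m * ((?L1 - ?L2) * A ?v1 + ?L2 * (A ?v1 - A ?v2))\<bar> \<le> (1/10) * (15 * D / a)"
    by (simp only: abs_mult)
  have "\<bar>Kf c m z1 r - Kf c m z2 r\<bar> \<le> 3 * (D / a) + (1/10) * (15 * D / a) + 3 * D / a"
    unfolding eq using t1 t2 dP by (smt (verit))
  also have "\<dots> \<le> 9 * D / a" using D0 inv_a by (simp add: divide_simps)
  finally show ?thesis .
qed

lemma Kf_param: assumes z: "good z" and r: "r \<in> {0..1}"
  shows "\<bar>Kf c m z r - Kf c' m' z r\<bar> \<le> (\<bar>c - c'\<bar> + 2 * \<bar>m - m'\<bar>) / (a-1)"
proof -
  let ?L = "exp (3 * E z r)" and ?v = "r^2 * z r"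
  have L: "?L \<le> 2" "?L > 0" using L_bound[OF z r] by auto
  have vb: "\<bar>?v\<bar> \<le> 1/a" by (rule v_small(2)[OF goodD(2)[OF z] r])
  have A: "0 < A ?v" "A ?v \<le> 1/(a-1)" using A_pos[OF vb] by auto
  have eq: "Kf c m z r - Kf c' m' z r = ((c - c') + (m - m') * ?L) * A ?v" unfolding Kf_def by (simp add: algebra_simps)
  have h1: "\<bar>m - m'\<bar> * ?L \<le> \<bar>m - m'\<bar> * 2" using L by (intro mult_left_mono) auto
  have h0: "\<bar>(m - m') * ?L\<bar> = \<bar>m - m'\<bar> * ?L" using L by (simp add: abs_mult)
  have h2: "\<bar>(c - c') + (m - m') * ?L\<bar> \<le> \<bar>c - c'\<bar> + \<bar>m - m'\<bar> * 2"
    using abs_triangle_ineq[of "c - c'" "(m - m') * ?L"] h0 h1 by linarith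
  have "\<bar>(c - c') + (m - m') * ?L\<bar> * \<bar>A ?v\<bar> \<le> (\<bar>c - c'\<bar> + \<bar>m - m'\<bar> * 2) * (1/(a-1))"
    using h2 A by (intro mult_mono) auto
  then have "\<bar>Kf c m z r - Kf c' m' z r\<bar> \<le> (\<bar>c - c'\<bar> + \<bar>m - m'\<bar> * 2) * (1/(a-1))"
    unfolding eq by (simp only: abs_mult)
  then show ?thesis by (simp add: mult.commute)
qed

end

definition clmp :: "real \<Rightarrow> real" where "clmp R = max 0 (min 1 R)"

lemma clmp_in: "clmp R \<in> {0..1}" by (auto simp: clmp_def)
lemma clmp_id: "R \<in> {0..1} \<Longrightarrow> clmp R = R" by (auto simp: clmp_def)
lemma clmp_ge[simp]: "0 \<le> clmp R" "clmp R \<le> 1" by (auto simp: clmp_def)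
lemma clmp_cont: "continuous_on UNIV clmp" unfolding clmp_def by (intro continuous_intros)

context ode_setup begin

definition "Tf c m z R = avg (Kf c m z) (clmp R)"
definition Xs :: "(real \<Rightarrow>\<^sub>C real) set" where "Xs = PiC UNIV (\<lambda>_. {-1/a..1/a})"
definition "Top c m zz = Bcontfun (Tf c m (apply_bcontfun zz))"

lemma Xs_iff: "zz \<in> Xs \<longleftrightarrow> (\<forall>x. \<bar>apply_bcontfun zz x\<bar> \<le> 1/a)"
proof -
  have e: "y \<in> {-1/a..1/a} \<longleftrightarrow> \<bar>y\<bar> \<le> 1/a" for y :: real by (auto simp: abs_le_iff)
  show ?thesis unfolding Xs_def mem_PiC_iff Pi_def e by simp
qed

lemma Xs_good: "zz \<in> Xs \<Longrightarrow> good (apply_bcontfun zz)"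
  unfolding good_def Xs_iff by auto

lemma Xs_closed: "complete Xs"
  unfolding complete_eq_closed Xs_def by (rule closed_PiC) auto

lemma Xs_ne: "0 \<in> Xs" unfolding Xs_iff using inv_a by simp

definition "params c m \<longleftrightarrow> c \<in> {1..3} \<and> \<bar>m\<bar> \<le> 1/10"

lemma Kf_cont_good: "good z \<Longrightarrow> continuous_on {0..1} (Kf c m z)"
  by (rule Kf_cont) (auto simp: good_def)

lemma Tf_props: assumes zz: "zz \<in> Xs" and p: "params c m"
  shows "Tf c m (apply_bcontfun zz) \<in> bcontfun" "\<And>x. \<bar>Tf c m (apply_bcontfun zz) x\<bar> \<le> 1/a"
proof -
  let ?z = "apply_bcontfun zz"
  have g: "good ?z" by (rule Xs_good[OF zz])
  have cK: "continuous_on {0..1} (Kf c m ?z)" by (rule Kf_cont_good[OF g])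
  have cont: "continuous_on UNIV (Tf c m ?z)"
    unfolding Tf_def[abs_def]
    by (rule continuous_on_compose2[OF avg_cont[OF cK] clmp_cont]) (auto simp: clmp_in)
  show b: "\<bar>Tf c m ?z x\<bar> \<le> 1/a" for x
  proof -
    have "\<bar>avg (Kf c m ?z) (clmp x)\<bar> \<le> (5/a)/5"
    proof (rule avg_abs)
      show "continuous_on {0..clmp x} (Kf c m ?z)" by (rule continuous_on_subset[OF cK]) auto
      show "0 \<le> clmp x" using clmp_in[of x] by auto
      fix r assume "r \<in> {0..clmp x}"
      then have "r \<in> {0..1}" using clmp_ge(2)[of x] unfolding atLeastAtMost_iff by linarith
      then show "\<bar>Kf c m ?z r\<bar> \<le> 5/a" using Kf_abs[OF g] p by (auto simp: params_def)
    qed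
    then show ?thesis by (simp add: Tf_def)
  qed
  show "Tf c m ?z \<in> bcontfun" using cont b by (intro bcontfun_normI) auto
qed

lemma Top_apply: "zz \<in> Xs \<Longrightarrow> params c m \<Longrightarrow> apply_bcontfun (Top c m zz) = Tf c m (apply_bcontfun zz)"
  unfolding Top_def using Tf_props(1) by (simp add: Bcontfun_inverse)

lemma Top_Xs: "zz \<in> Xs \<Longrightarrow> params c m \<Longrightarrow> Top c m zz \<in> Xs"
  using Top_apply Tf_props(2) Xs_iff by metis

lemma Top_diff: fixes z1 z2 :: "real \<Rightarrow>\<^sub>C real" assumes z1: "z1 \<in> Xs" and z2: "z2 \<in> Xs" and p: "params c m" and p': "params c' m'"
    and B: "\<And>r. r \<in> {0..1} \<Longrightarrow> \<bar>Kf c m (apply_bcontfun z1) r - Kf c' m' (apply_bcontfun z2) r\<bar> \<le> B"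
  shows "dist (Top c m z1) (Top c' m' z2) \<le> B / 5"
proof (rule dist_bound)
  fix x
  let ?K1 = "Kf c m (apply_bcontfun z1)" and ?K2 = "Kf c' m' (apply_bcontfun z2)"
  have c1: "continuous_on {0..1} ?K1" by (rule Kf_cont_good[OF Xs_good[OF z1]])
  have c2: "continuous_on {0..1} ?K2" by (rule Kf_cont_good[OF Xs_good[OF z2]])
  let ?R = "clmp x"
  have R: "?R \<in> {0..1}" by (rule clmp_in)
  have c1': "continuous_on {0..?R} ?K1" by (rule continuous_on_subset[OF c1]) auto
  have c2': "continuous_on {0..?R} ?K2" by (rule continuous_on_subset[OF c2]) auto
  have "avg ?K1 ?R - avg ?K2 ?R = avg (\<lambda>r. ?K1 r - ?K2 r) ?R" by (rule avg_diff[OF c1' c2'])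
  also have "\<bar>\<dots>\<bar> \<le> B / 5"
  proof (rule avg_abs)
    show "continuous_on {0..?R} (\<lambda>r. ?K1 r - ?K2 r)" using c1' c2' by (intro continuous_intros)
    show "0 \<le> ?R" using R by auto
    fix r assume "r \<in> {0..?R}" then have "r \<in> {0..1}" using clmp_ge(2)[of x] unfolding atLeastAtMost_iff by linarith
    then show "\<bar>?K1 r - ?K2 r\<bar> \<le> B" by (rule B)
  qed
  finally show "dist (apply_bcontfun (Top c m z1) x) (apply_bcontfun (Top c' m' z2) x) \<le> B / 5"
    using Top_apply[OF z1 p] Top_apply[OF z2 p'] by (simp add: Tf_def dist_real_def)
qed

lemma Top_contr: fixes z1 z2 :: "real \<Rightarrow>\<^sub>C real" assumes z1: "z1 \<in> Xs" and z2: "z2 \<in> Xs" and p: "params c m"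
  shows "dist (Top c m z1) (Top c m z2) \<le> (1/2) * dist z1 z2"
proof -
  have "dist (Top c m z1) (Top c m z2) \<le> (9 * dist z1 z2 / a) / 5"
  proof (rule Top_diff[OF z1 z2 p p])
    fix r :: real assume r: "r \<in> {0..1}"
    show "\<bar>Kf c m (apply_bcontfun z1) r - Kf c m (apply_bcontfun z2) r\<bar> \<le> 9 * dist z1 z2 / a"
      by (rule Kf_lip[OF Xs_good[OF z1] Xs_good[OF z2] _ r]) 
         (use p dist_bounded[where f=z1 and g=z2] in \<open>auto simp: params_def dist_real_def\<close>)
  qed
  also have "\<dots> \<le> (1/2) * dist z1 z2"
  proof -
    have "dist z1 z2 * 18 \<le> dist z1 z2 * (a * 5)" using a_big by (intro mult_left_mono) auto
    then show ?thesis using a_big by (simp add: divide_simps mult.commute)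
  qed
  finally show ?thesis .
qed

lemma fix_exists: assumes p: "params c m" shows "\<exists>zz\<in>Xs. Top c m zz = zz"
proof -
  have "\<exists>!x\<in>Xs. Top c m x = x"
    by (rule Banach_fix[where c="1/2"]) (use Xs_closed Xs_ne Top_Xs[OF _ p] Top_contr[OF _ _ p] in auto)
  then show ?thesis by blast
qed

definition "zfix c m = (SOME zz. zz \<in> Xs \<and> Top c m zz = zz)"

lemma zfix: assumes "params c m" shows "zfix c m \<in> Xs" "Top c m (zfix c m) = zfix c m"
  using someI_ex[OF fix_exists[OF assms, unfolded Bex_def]] unfolding zfix_def by auto

lemma zfix_dist: assumes p: "params c m" and p': "params c' m'"
  shows "dist (zfix c m) (zfix c' m') \<le> 2 * ((\<bar>c - c'\<bar> + 2 * \<bar>m - m'\<bar>) / (a-1) / 5)"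
proof -
  let ?z = "zfix c m" and ?z' = "zfix c' m'"
  have z: "?z \<in> Xs" "Top c m ?z = ?z" using zfix[OF p] by auto
  have z': "?z' \<in> Xs" "Top c' m' ?z' = ?z'" using zfix[OF p'] by auto
  have P: "dist (Top c m ?z) (Top c' m' ?z) \<le> (\<bar>c - c'\<bar> + 2 * \<bar>m - m'\<bar>) / (a-1) / 5"
    by (rule Top_diff[OF z(1) z(1) p p']) (rule Kf_param[OF Xs_good[OF z(1)]])
  have "dist ?z ?z' \<le> dist (Top c m ?z) (Top c' m' ?z) + dist (Top c' m' ?z) (Top c' m' ?z')"
    using z z' dist_triangle by metis
  also have "\<dots> \<le> (\<bar>c - c'\<bar> + 2 * \<bar>m - m'\<bar>) / (a-1) / 5 + (1/2) * dist ?z ?z'"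
    using P Top_contr[OF z(1) z'(1) p'] by linarith
  finally show ?thesis by linarith
qed

lemma zfix_at1: assumes p: "params c m"
  shows "((c - 2 * \<bar>m\<bar>) / (a+1) - 3 / a^2) / 5 \<le> apply_bcontfun (zfix c m) 1"
        "apply_bcontfun (zfix c m) 1 \<le> ((c + 2 * \<bar>m\<bar>) / (a-1) + 3 / a^2) / 5"
proof -
  let ?z = "zfix c m"
  have z: "?z \<in> Xs" "Top c m ?z = ?z" using zfix[OF p] by auto
  have g: "good (apply_bcontfun ?z)" by (rule Xs_good[OF z(1)])
  have e: "apply_bcontfun ?z 1 = avg (Kf c m (apply_bcontfun ?z)) 1"
    using Top_apply[OF z(1) p] z(2) by (metis Tf_def clmp_id atLeastAtMost_iff order_refl zero_le_one)
  have "((c - 2 * \<bar>m\<bar>) / (a+1) - 3 / a^2) / 5 \<le> avg (Kf c m (apply_bcontfun ?z)) 1 \<and>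
        avg (Kf c m (apply_bcontfun ?z)) 1 \<le> ((c + 2 * \<bar>m\<bar>) / (a-1) + 3 / a^2) / 5"
    by (rule avg_bounds[OF Kf_cont_good[OF g]]) (use Kf_bounds[OF g] p in \<open>auto simp: params_def\<close>)
  then show "((c - 2 * \<bar>m\<bar>) / (a+1) - 3 / a^2) / 5 \<le> apply_bcontfun (zfix c m) 1"
        "apply_bcontfun (zfix c m) 1 \<le> ((c + 2 * \<bar>m\<bar>) / (a-1) + 3 / a^2) / 5" using e by auto
qed

end

context ode_setup begin

lemma aa: "2500 * a \<le> a * a" using a_big by (intro mult_right_mono) auto

lemma d1_cont: "continuous_on {1..2} d1"
  by (intro continuous_at_imp_continuous_on ballI DERIV_isCont[OF D1]) auto

lemma vstar: "\<exists>vs. 0 < vs \<and> vs \<le> 1/a \<and> d1 (1+vs) = 0 \<and> 1/(3*(a+1)) \<le> vs \<and> vs \<le> 1/(3*(a-1))"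
proof -
  have cont: "continuous_on {0..1/a} (\<lambda>t. d1 (1+t))"
  proof (rule continuous_on_compose2[OF d1_cont])
    show "continuous_on {0..1/a} ((+) 1)" by (intro continuous_intros)
    show "(+) 1 ` {0..1/a} \<subseteq> {1..2}" using inv_a by auto
  qed
  have f0: "d1 (1+0) \<le> 0" using d1_at1 by simp
  have "\<bar>d1 (1 + 1/a) + 1/3 - a * (1/a)\<bar> \<le> M * (1/a)^2" by (rule d1_close) (use inv_a in auto)
  moreover have "M * (1/a)^2 \<le> 1/2"
  proof -
    have "M * (1/a)^2 \<le> (a/50) * (1/a)^2" using M_small by (intro mult_right_mono) auto
    also have "\<dots> = 1/(50*a)" using inv_a by (simp add: power2_eq_square)
    also have "\<dots> \<le> 1/2" using a_big by (simp add: divide_simps)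
    finally show ?thesis .
  qed
  ultimately have f1: "0 \<le> d1 (1 + 1/a)" using inv_a by (simp add: abs_le_iff)
  obtain vs where vs: "vs \<in> {0..1/a}" "d1 (1+vs) = 0"
    using IVT'[of "\<lambda>t. d1 (1+t)" 0 0 "1/a", OF f0 f1 _ cont] inv_a by auto
  have vh: "0 \<le> vs" "vs \<le> 1/2" using vs(1) inv_a(1) unfolding atLeastAtMost_iff by linarith+
  have "\<bar>d1 (1+vs) + 1/3 - a * vs\<bar> \<le> M * vs^2" by (rule d1_close) (use vh in auto)
  then have h: "\<bar>1/3 - a * vs\<bar> \<le> M * vs^2" using vs by simp
  have "vs * vs \<le> (1/a) * vs" using vs(1) by (intro mult_right_mono) auto
  then have "M * vs^2 \<le> (a/50) * ((1/a) * vs)"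
    using M_small vs M_nonneg by (intro mult_mono) (auto simp: power2_eq_square)
  also have "\<dots> = vs / 50" using inv_a by simp
  finally have h2: "\<bar>1/3 - a * vs\<bar> \<le> vs / 50" using h by linarith
  then have q: "1/3 - a * vs \<le> vs/50 \<and> - (1/3 - a * vs) \<le> vs/50" by (simp only: abs_le_iff)
  then have q1: "1/3 - a * vs \<le> vs/50" and q2: "a * vs - 1/3 \<le> vs/50" by linarith+
  have e1: "vs * (a+1) = a * vs + vs" and e2: "vs * (a-1) = a * vs - vs" by (simp_all add: algebra_simps)
  have lo: "1/3 \<le> vs * (a+1)" using q1 e1 vs(1) by auto
  have hi: "vs * (a-1) \<le> 1/3" using q2 e2 vs(1) by auto
  have vpos: "0 < vs" using lo vs by (cases "vs = 0") auto
  have l1: "1 \<le> vs * (3*(a+1))" using lo by (simp add: algebra_simps)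
  have l2: "vs * (3*(a-1)) \<le> 1" using hi by (simp add: algebra_simps)
  have "1/(3*(a+1)) \<le> vs" using l1 a_big by (subst divide_le_eq) auto
  moreover have "vs \<le> 1/(3*(a-1))" using l2 a_big by (subst le_divide_eq) auto
  ultimately show ?thesis using vs vpos by auto
qed

lemma Phi_cont: fixes mf :: "real \<Rightarrow> real" assumes mc: "continuous_on {1..3} mf" and mb: "\<And>c. c \<in> {1..3} \<Longrightarrow> \<bar>mf c\<bar> \<le> 1/10"
  shows "continuous_on {1..3} (\<lambda>c. apply_bcontfun (zfix c (mf c)) 1)"
  unfolding continuous_on_eq_continuous_within
proof
  fix c :: real assume c: "c \<in> {1..3}"
  show "continuous (at c within {1..3}) (\<lambda>c. apply_bcontfun (zfix c (mf c)) 1)"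
    unfolding continuous_within_eps_delta
  proof (intro allI impI)
    fix e :: real assume e: "e > 0"
    have "continuous (at c within {1..3}) mf" using mc c by (simp add: continuous_on_eq_continuous_within)
    then obtain d where d: "d > 0" "\<And>x. x \<in> {1..3} \<Longrightarrow> dist x c < d \<Longrightarrow> dist (mf x) (mf c) < e/4"
      unfolding continuous_within_eps_delta using e by (metis divide_pos_pos zero_less_numeral)
    show "\<exists>d>0. \<forall>x'\<in>{1..3}. dist x' c < d \<longrightarrow>
        dist (apply_bcontfun (zfix x' (mf x')) 1) (apply_bcontfun (zfix c (mf c)) 1) < e"
    proof (intro exI[of _ "min d (e/2)"] conjI ballI impI)
      show "0 < min d (e/2)" using d e by auto
      fix x assume x: "x \<in> {1..3}" "dist x c < min d (e/2)"
      have px: "params x (mf x)" and pc: "params c (mf c)" using x c mb by (auto simp: params_def)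
      have "dist (apply_bcontfun (zfix x (mf x)) 1) (apply_bcontfun (zfix c (mf c)) 1) \<le> dist (zfix x (mf x)) (zfix c (mf c))"
        by (rule dist_bounded)
      also have "\<dots> \<le> 2 * ((\<bar>x - c\<bar> + 2 * \<bar>mf x - mf c\<bar>) / (a-1) / 5)" by (rule zfix_dist[OF px pc])
      also have "\<dots> \<le> \<bar>x - c\<bar> + 2 * \<bar>mf x - mf c\<bar>"
      proof -
        let ?X = "\<bar>x - c\<bar> + 2 * \<bar>mf x - mf c\<bar>"
        have X0: "0 \<le> ?X" by simp
        have "2/(5*(a-1)) \<le> 1" using a_big by (simp add: divide_simps)
        then have "?X * (2/(5*(a-1))) \<le> ?X * 1" using X0 by (intro mult_left_mono) auto
        moreover have "2 * (?X / (a-1) / 5) = ?X * (2/(5*(a-1)))" by (simp add: field_simps)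
        ultimately show ?thesis by simp
      qed
      also have "\<dots> < e/2 + 2 * (e/4)" using x d(2)[OF x(1)] by (auto simp: dist_real_def)
      finally show "dist (apply_bcontfun (zfix x (mf x)) 1) (apply_bcontfun (zfix c (mf c)) 1) < e" by simp
    qed
  qed
qed

lemma shoot: fixes mf :: "real \<Rightarrow> real" assumes mc: "continuous_on {1..3} mf" and mb: "\<And>c. c \<in> {1..3} \<Longrightarrow> \<bar>mf c\<bar> \<le> 1/10"
  shows "\<exists>c\<in>{1..3}. d1 (1 + apply_bcontfun (zfix c (mf c)) 1) = 0"
proof -
  obtain vs where vs: "0 < vs" "vs \<le> 1/a" "d1 (1+vs) = 0" "1/(3*(a+1)) \<le> vs" "vs \<le> 1/(3*(a-1))"
    using vstar by blast
  let ?P = "\<lambda>c. apply_bcontfun (zfix c (mf c)) 1"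
  have p1: "params (1::real) (mf 1)" and p3: "params (3::real) (mf 3)" using mb by (auto simp: params_def)
  have m1: "\<bar>mf 1\<bar> \<le> 1/10" and m3: "\<bar>mf 3\<bar> \<le> 1/10" using mb by auto
  have a3: "3 / a^2 \<le> 1/(100 * a)" using a_big by (simp add: divide_simps power2_eq_square)
  have "?P 1 \<le> ((1 + 2 * \<bar>mf 1\<bar>) / (a-1) + 3 / a^2) / 5" by (rule zfix_at1(2)[OF p1])
  also have "\<dots> \<le> ((1.2) / (a-1) + 1/(100*a)) / 5" using m1 a3 a_big by (intro divide_right_mono add_mono) auto
  also have "\<dots> \<le> ((1.3) / a + 1/(100*a)) / 5"
  proof -
    have "1.2 / (a-1) \<le> 1.3 / a" using a_big by (simp add: divide_simps)
    then show ?thesis by simp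
  qed
  also have "\<dots> = 0.262 / a" by (simp add: field_simps)
  also have "\<dots> \<le> 1/(3*(a+1))" using a_big by (simp add: divide_simps)
  also have "\<dots> \<le> vs" by (rule vs(4))
  finally have lo: "?P 1 \<le> vs" .
  have "vs \<le> 1/(3*(a-1))" by (rule vs(5))
  also have "\<dots> \<le> 0.34 / a" using a_big by (simp add: divide_simps)
  also have "\<dots> \<le> (2.7 / a - 1/(100*a)) / 5" using a_big by (simp add: divide_simps)
  also have "\<dots> \<le> ((2.8) / (a+1) - 1/(100*a)) / 5"
  proof -
    have "2.7 / a \<le> 2.8 / (a+1)" using a_big by (simp add: divide_simps)
    then show ?thesis by simp
  qed
  also have "\<dots> \<le> ((3 - 2 * \<bar>mf 3\<bar>) / (a+1) - 3 / a^2) / 5" using m3 a3 a_big by (intro divide_right_mono diff_mono) auto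
  also have "\<dots> \<le> ?P 3" by (rule zfix_at1(1)[OF p3])
  finally have hi: "vs \<le> ?P 3" .
  obtain c where c: "c \<in> {1..3}" "?P c = vs"
    using IVT'[of ?P 1 vs 3, OF lo hi _ Phi_cont[OF mc mb]] by auto
  then show ?thesis using vs(3) by auto
qed

end

lemma alg:
  fixes R L d1v d2v gv c m L3 z K :: real
  assumes R: "R \<noteq> 0" and L: "L \<noteq> 0" and d: "d2v \<noteq> 0"
    and K: "K = (c + m * L3) * (1/d2v) + (3 * (R^2*z) * d2v - (3 - R^2*z) * d1v - gv) * (1/d2v) / R^2"
  shows "(R*L)^2 / R^5 * ((3 * R^2 * L - R^3 * (L * (R * z))) / (L * L) * d1v + d2v * (R * (K - 3 * z)) * (R^3 / L)) + (R*L) / R^2 * gv = (c + m * L3) * (R * L)"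
  unfolding K using R L d by (simp add: field_simps power2_eq_square eval_nat_numeral)

context ode_setup begin

lemma fix_props: assumes p: "params c m"
  shows "good (apply_bcontfun (zfix c m))"
    "\<And>R. R \<in> {0..1} \<Longrightarrow> apply_bcontfun (zfix c m) R = avg (Kf c m (apply_bcontfun (zfix c m))) R"
proof -
  have z: "zfix c m \<in> Xs" "Top c m (zfix c m) = zfix c m" using zfix[OF p] by auto
  show "good (apply_bcontfun (zfix c m))" by (rule Xs_good[OF z(1)])
  fix R :: real assume R: "R \<in> {0..1}"
  have "apply_bcontfun (zfix c m) R = Tf c m (apply_bcontfun (zfix c m)) R"
    using Top_apply[OF z(1) p] z(2) by metis
  then show "apply_bcontfun (zfix c m) R = avg (Kf c m (apply_bcontfun (zfix c m))) R"
    using R by (simp add: Tf_def clmp_id)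
qed

lemma solution:
  assumes p: "params c m" and gz: "good z" and fx: "\<And>R. R \<in> {0..1} \<Longrightarrow> z R = avg (Kf c m z) R"
  shows "\<exists>\<phi> \<phi>' \<phi>'' :: real \<Rightarrow> real.
           (\<forall>R\<in>{0..1}. \<phi> R \<ge> 0)
         \<and> (\<forall>R\<in>{0..1}. (\<phi> has_real_derivative \<phi>' R) (at R within {0..1}))
         \<and> (\<forall>R\<in>{0..1}. (\<phi>' has_real_derivative \<phi>'' R) (at R within {0..1}))
         \<and> \<phi> 0 = 0 \<and> \<phi>'' 0 = 0
         \<and> (\<forall>R\<in>{0..1}. \<phi>' R > 0)
         \<and> (let lam = (\<lambda>R. if R = 0 then \<phi>' 0 else \<phi> R / R);
                yy = (\<lambda>R. \<phi>' R / lam R)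
            in (\<forall>R\<in>{0<..1}. \<exists>D.
                  ((\<lambda>r. r ^ 4 / \<phi> r * deriv g (yy r)) has_real_derivative D) (at R within {0..1})
                \<and> (\<phi> R)\<^sup>2 / R ^ 5 * D + \<phi> R / R\<^sup>2 * g (yy R)
                    = (c + m * (lam R) ^ 3) * \<phi> R)
               \<and> deriv g (yy 1) = d1 (1 + z 1))
         \<and> \<phi> 1 = 1"
proof -
  define K where "K = Kf c m z"
  have cK: "continuous_on {0..1} K" unfolding K_def by (rule Kf_cont_good[OF gz])
  have zc: "continuous_on {0..1} z" and zb: "\<And>s. s \<in> {0..1} \<Longrightarrow> \<bar>z s\<bar> \<le> 1/a" using gz by (auto simp: good_def)
  define Lm where "Lm r = exp (E z r)" for r
  define v where "v r = r^2 * z r" for r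
  define ph where "ph r = r * Lm r" for r
  define ph1 where "ph1 r = Lm r * (1 + v r)" for r
  define ph2 where "ph2 r = Lm r * (r * z r) * (1 + v r) + (0 + r * (K r - 3 * z r)) * Lm r" for r
  have Lpos: "Lm r > 0" for r unfolding Lm_def by simp
  have vb: "\<bar>v r\<bar> \<le> 1/a" if "r \<in> {0..1}" for r unfolding v_def by (rule v_small(2)[OF zb that])
  have v1: "1 + v r > 0" if "r \<in> {0..1}" for r using small_half[OF vb[OF that]] by auto
  have dE: "(E z has_real_derivative R * z R) (at R within {0..1})" if R: "R \<in> {0..1}" for R
  proof -
    have "((\<lambda>r. integral {0..r} (\<lambda>s. s * z s)) has_real_derivative R * z R) (at R within {0..1})"
      by (rule integral_has_real_derivative[OF _ R]) (intro continuous_intros zc)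
    from DERIV_diff[OF this DERIV_const[of "integral {0..1} (\<lambda>s. s * z s)"]]
    show ?thesis unfolding E_def[abs_def] by simp
  qed
  have dL: "(Lm has_real_derivative Lm R * (R * z R)) (at R within {0..1})" if R: "R \<in> {0..1}" for R
    using DERIV_chain2[OF DERIV_exp dE[OF R]] unfolding Lm_def[abs_def] by simp
  have dv: "(v has_real_derivative R * (K R - 3 * z R)) (at R within {0..1})" if R: "R \<in> {0..1}" for R
  proof -
    have ad: "((\<lambda>r. r^2 * avg K r) has_real_derivative R * (K R - 3 * z R)) (at R within {0..1})"
      using avg_deriv[OF cK R] fx[OF R] by (simp add: K_def)
    show ?thesis
    proof (rule has_field_derivative_transform_within[OF ad zero_less_one R])
    fix x assume "x \<in> {0..1}" "dist x R < 1"
    then show "x^2 * avg K x = v x" using fx unfolding v_def K_def by simp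
  qed
  qed
  have dph: "(ph has_real_derivative ph1 R) (at R within {0..1})" if R: "R \<in> {0..1}" for R
  proof -
    have "((\<lambda>r. r * Lm r) has_real_derivative 1 * Lm R + Lm R * (R * z R) * R) (at R within {0..1})"
      by (rule DERIV_mult[OF DERIV_ident dL[OF R]])
    moreover have "1 * Lm R + Lm R * (R * z R) * R = ph1 R" unfolding ph1_def v_def by (simp add: algebra_simps power2_eq_square)
    ultimately show ?thesis unfolding ph_def[abs_def] by simp
  qed
  have dph1: "(ph1 has_real_derivative ph2 R) (at R within {0..1})" if R: "R \<in> {0..1}" for R
  proof -
    have dv1: "((\<lambda>r. 1 + v r) has_real_derivative 0 + R * (K R - 3 * z R)) (at R within {0..1})"
      by (rule DERIV_add[OF DERIV_const dv[OF R]])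
    have "((\<lambda>r. Lm r * (1 + v r)) has_real_derivative Lm R * (R * z R) * (1 + v R) + (0 + R * (K R - 3 * z R)) * Lm R) (at R within {0..1})"
      by (rule DERIV_mult[OF dL[OF R] dv1])
    then show ?thesis unfolding ph1_def[abs_def] ph2_def by simp
  qed
  have E1: "E z 1 = 0" unfolding E_def by simp
  have main: "\<exists>D. ((\<lambda>r. r ^ 4 / ph r * deriv g (ph1 r / (if r = 0 then ph1 0 else ph r / r))) has_real_derivative D) (at R within {0..1})
                \<and> (ph R)\<^sup>2 / R ^ 5 * D + ph R / R\<^sup>2 * g (ph1 R / (if R = 0 then ph1 0 else ph R / R))
                    = (c + m * (if R = 0 then ph1 0 else ph R / R) ^ 3) * ph R" if R0: "R \<in> {0<..1}" for R
  proof -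
    have R: "R \<in> {0..1}" and Rne: "R \<noteq> 0" using R0 by auto
    have pos: "1 + v R > 0" by (rule v1[OF R])
    have d2ne: "d2 (1 + v R) \<noteq> 0" using d2_small[OF vb[OF R]] a_big by auto
    have Lne: "Lm R \<noteq> 0" using Lpos[of R] by simp
    have dv1: "((\<lambda>r. 1 + v r) has_real_derivative 0 + R * (K R - 3 * z R)) (at R within {0..1})"
      by (rule DERIV_add[OF DERIV_const dv[OF R]])
    have dd1: "((\<lambda>r. d1 (1 + v r)) has_real_derivative d2 (1 + v R) * (0 + R * (K R - 3 * z R))) (at R within {0..1})"
      by (rule DERIV_chain2[OF D1[OF pos] dv1])
    have q: "((\<lambda>r. r^3 / Lm r) has_real_derivative (real 3 * R^(3 - Suc 0) * Lm R - R^3 * (Lm R * (R * z R))) / (Lm R * Lm R)) (at R within {0..1})"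
      by (rule DERIV_divide[OF DERIV_pow dL[OF R] Lne])
    define D where "D = (real 3 * R^(3 - Suc 0) * Lm R - R^3 * (Lm R * (R * z R))) / (Lm R * Lm R) * d1 (1 + v R)
                       + d2 (1 + v R) * (0 + R * (K R - 3 * z R)) * (R^3 / Lm R)"
    have hd: "((\<lambda>r. r^3 / Lm r * d1 (1 + v r)) has_real_derivative D) (at R within {0..1})"
      unfolding D_def by (rule DERIV_mult[OF q dd1])
    have hd2: "((\<lambda>r. r ^ 4 / ph r * deriv g (ph1 r / (if r = 0 then ph1 0 else ph r / r))) has_real_derivative D) (at R within {0..1})"
    proof (rule has_field_derivative_transform_within[OF hd zero_less_one R])
      fix x assume x: "x \<in> {0..1}" "dist x R < 1"
      show "x^3 / Lm x * d1 (1 + v x) = x ^ 4 / ph x * deriv g (ph1 x / (if x = 0 then ph1 0 else ph x / x))"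
      proof (cases "x = 0")
        case True then show ?thesis by (simp add: ph_def)
      next
        case False
        have "Lm x \<noteq> 0" using Lpos[of x] by simp
        then have "ph1 x / (if x = 0 then ph1 0 else ph x / x) = 1 + v x" using False
          by (simp add: ph1_def ph_def)
        moreover have "x ^ 4 / ph x = x^3 / Lm x" using False by (simp add: ph_def eval_nat_numeral)
        ultimately show ?thesis by (simp add: d1_def)
      qed
    qed
    have yyR: "ph1 R / (if R = 0 then ph1 0 else ph R / R) = 1 + v R" using Rne Lne by (simp add: ph1_def ph_def)
    have yyR': "ph1 R / Lm R = 1 + v R" using Lne by (simp add: ph1_def)
    have lamR: "(if R = 0 then ph1 0 else ph R / R) = Lm R" using Rne by (simp add: ph_def)
    have L3: "exp (3 * E z R) = Lm R ^ 3" unfolding Lm_def using exp_of_nat_mult[of 3 "E z R"] by simp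
    have KR: "K R = (c + m * Lm R ^ 3) * (1 / d2 (1 + v R)) + (3 * (R^2 * z R) * d2 (1 + v R) - (3 - R^2 * z R) * d1 (1 + v R) - g (1 + v R)) * (1 / d2 (1 + v R)) / R^2"
      unfolding K_def Kf_def Pf_def A_def Q_def v_def using Rne L3 by (simp add: add.commute)
    have "(R * Lm R)^2 / R^5 * ((3 * R^2 * Lm R - R^3 * (Lm R * (R * z R))) / (Lm R * Lm R) * d1 (1 + v R) + d2 (1 + v R) * (R * (K R - 3 * z R)) * (R^3 / Lm R)) + (R * Lm R) / R^2 * g (1 + v R) = (c + m * Lm R ^ 3) * (R * Lm R)"
      by (rule alg[OF Rne Lne d2ne KR])
    then have "(ph R)\<^sup>2 / R ^ 5 * D + ph R / R\<^sup>2 * g (ph1 R / (if R = 0 then ph1 0 else ph R / R))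
                    = (c + m * (if R = 0 then ph1 0 else ph R / R) ^ 3) * ph R"
      unfolding lamR using yyR' by (simp add: D_def ph_def)
    then show ?thesis using hd2 by blast
  qed
  have y1: "ph1 1 / (if (1::real) = 0 then ph1 0 else ph 1 / 1) = 1 + z 1" using E1 by (simp add: ph1_def ph_def Lm_def v_def)
  show ?thesis
    apply (rule exI[of _ ph], rule exI[of _ ph1], rule exI[of _ ph2])
    unfolding Let_def
    using dph dph1 main y1 Lpos v1 E1 by (auto simp: ph_def ph2_def ph1_def Lm_def d1_def intro!: mult_pos_pos)
qed

end

definition Qc :: "real^3^3" where
  "Qc = (\<chi> i j. if (i = 2 \<and> j = 1) \<or> (i = 3 \<and> j = 2) \<or> (i = 1 \<and> j = 3) then 1 else 0)"

definition Ek :: "3 \<Rightarrow> real^3^3" where "Ek k = dyad (axis k 1)"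

lemma three_neq: "(1::3) \<noteq> 2" "(1::3) \<noteq> 3" "(2::3) \<noteq> 3" "(2::3) \<noteq> 1" "(3::3) \<noteq> 1" "(3::3) \<noteq> 2"
  by simp_all

lemma Qc_orth: "transpose Qc ** Qc = mat 1" "Qc ** transpose Qc = mat 1"
  by (simp_all add: vec_eq_iff matrix_matrix_mult_def transpose_def Qc_def mat_def forall_3 sum_3)

lemma Qc_det: "det Qc = 1" by (simp add: det_3 Qc_def)
lemma Qc_SO3: "Qc \<in> SO3" "transpose Qc \<in> SO3"
  using Qc_orth Qc_det by (auto simp: SO3_def orthogonal_matrix_def det_transpose)

lemma conj_E1: "Qc ** Ek 1 ** transpose Qc = Ek 2"
  by (simp add: vec_eq_iff matrix_matrix_mult_def transpose_def Qc_def Ek_def dyad_def axis_def forall_3 sum_3)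
lemma conj_E2: "Qc ** Ek 2 ** transpose Qc = Ek 3"
  by (simp add: vec_eq_iff matrix_matrix_mult_def transpose_def Qc_def Ek_def dyad_def axis_def forall_3 sum_3)
lemma E_sum: "Ek 1 + Ek 2 + Ek 3 = mat 1"
  by (simp add: vec_eq_iff Ek_def dyad_def axis_def forall_3 mat_def)
lemma det_line: "det (mat 1 + t *\<^sub>R Ek k) = 1 + t"
proof -
  have "k = 1 \<or> k = 2 \<or> k = 3" using exhaust_3 by blast
  then show ?thesis by (auto simp: det_3 Ek_def dyad_def axis_def mat_def)
qed
lemma conj_line1: "Qc ** (mat 1 + t *\<^sub>R Ek 1) ** transpose Qc = mat 1 + t *\<^sub>R Ek 2"
  by (simp add: vec_eq_iff matrix_matrix_mult_def transpose_def Qc_def Ek_def dyad_def axis_def forall_3 sum_3 mat_def)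
lemma conj_line2: "Qc ** (mat 1 + t *\<^sub>R Ek 2) ** transpose Qc = mat 1 + t *\<^sub>R Ek 3"
  by (simp add: vec_eq_iff matrix_matrix_mult_def transpose_def Qc_def Ek_def dyad_def axis_def forall_3 sum_3 mat_def)


lemma line_deriv:
  fixes W :: "real^3^3 \<Rightarrow> real" and L :: "(real^3^3) \<Rightarrow>\<^sub>L real"
  assumes d: "(W has_derivative blinfun_apply L) (at (mat 1))"
  shows "((\<lambda>t. W (mat 1 + t *\<^sub>R B)) has_real_derivative blinfun_apply L B) (at 0)"
proof -
  have d1: "((\<lambda>t. mat 1 + t *\<^sub>R B) has_derivative (\<lambda>h. h *\<^sub>R B)) (at 0)"
    by (auto intro!: derivative_eq_intros)
  have d2: "(W has_derivative blinfun_apply L) (at ((\<lambda>t. mat 1 + t *\<^sub>R B) 0))" using d by simp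
  have "((W \<circ> (\<lambda>t. mat 1 + t *\<^sub>R B)) has_derivative (blinfun_apply L \<circ> (\<lambda>h. h *\<^sub>R B))) (at 0)"
    by (rule diff_chain_at[OF d1 d2])
  moreover have "(blinfun_apply L \<circ> (\<lambda>h. h *\<^sub>R B)) = (*) (blinfun_apply L B)"
    by (rule ext) (simp add: blinfun.scaleR_right)
  ultimately show ?thesis by (simp add: has_field_derivative_def o_def)
qed

lemma W_facts:
  fixes W :: "real^3^3 \<Rightarrow> real" and g :: "real \<Rightarrow> real"
  assumes W_C1: "\<exists>W' :: ((real^3^3) \<Rightarrow> ((real^3^3) \<Rightarrow>\<^sub>L real)).
                 continuous_on GLp3 W' \<and> (\<forall>F\<in>GLp3. (W has_derivative blinfun_apply (W' F)) (at F))"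
    and W_obj: "\<And>F Q. F \<in> GLp3 \<Longrightarrow> Q \<in> SO3 \<Longrightarrow> W (Q ** F) = W F"
    and W_iso: "\<And>F Q. F \<in> GLp3 \<Longrightarrow> Q \<in> SO3 \<Longrightarrow> W (F ** Q) = W F"
    and W_hom: "\<And>F \<sigma>. F \<in> GLp3 \<Longrightarrow> \<sigma> > 0 \<Longrightarrow> W (\<sigma> *\<^sub>R F) = W F / \<sigma>"
    and W_norm: "W (mat 1) = 1"
    and g_def: "\<And>y. y > 0 \<Longrightarrow> g y = uniaxial W y"
  shows "g 1 = 1" "deriv g 1 = -1/3"
proof -
  show "g 1 = 1" using g_def[of 1] W_norm by (simp add: uniaxial_def)
  obtain W' where W': "\<forall>F\<in>GLp3. (W has_derivative blinfun_apply (W' F)) (at F)" using W_C1 by blast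
  have I: "mat 1 \<in> GLp3" by (simp add: GLp3_def)
  define L where "L = W' (mat 1)"
  have dL: "(W has_derivative blinfun_apply L) (at (mat 1))" using W' I by (simp add: L_def)
  have lineGL: "mat 1 + t *\<^sub>R Ek k \<in> GLp3" if "t > -1" for t k using that by (simp add: GLp3_def det_line)
  have conj: "W (Qc ** F ** transpose Qc) = W F" if F: "F \<in> GLp3" for F
  proof -
    have "Qc ** F \<in> GLp3" using F by (simp add: GLp3_def det_mul Qc_det)
    then have "W ((Qc ** F) ** transpose Qc) = W (Qc ** F)" using W_iso Qc_SO3 by blast
    also have "\<dots> = W F" using W_obj F Qc_SO3 by blast
    finally show ?thesis .
  qed
  have eqE: "blinfun_apply L (Ek k) = blinfun_apply L (Ek k')"
    if c: "\<And>t. Qc ** (mat 1 + t *\<^sub>R Ek k) ** transpose Qc = mat 1 + t *\<^sub>R Ek k'" for k k'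
  proof -
    have d1: "((\<lambda>t. W (mat 1 + t *\<^sub>R Ek k)) has_real_derivative blinfun_apply L (Ek k)) (at 0)"
      by (rule line_deriv[OF dL])
    have d2: "((\<lambda>t. W (mat 1 + t *\<^sub>R Ek k')) has_real_derivative blinfun_apply L (Ek k)) (at 0)"
    proof (rule has_field_derivative_transform_within_open[OF d1, of "{-1<..}"])
      fix t :: real assume "t \<in> {-1<..}"
      then have "mat 1 + t *\<^sub>R Ek k \<in> GLp3" using lineGL by auto
      from conj[OF this] show "W (mat 1 + t *\<^sub>R Ek k) = W (mat 1 + t *\<^sub>R Ek k')" using c by simp
    qed auto
    have d3: "((\<lambda>t. W (mat 1 + t *\<^sub>R Ek k')) has_real_derivative blinfun_apply L (Ek k')) (at 0)"
      by (rule line_deriv[OF dL])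
    show ?thesis using DERIV_unique[OF d2 d3] .
  qed
  have e12: "blinfun_apply L (Ek 1) = blinfun_apply L (Ek 2)" by (rule eqE[OF conj_line1])
  have e23: "blinfun_apply L (Ek 2) = blinfun_apply L (Ek 3)" by (rule eqE[OF conj_line2])
  have LI: "blinfun_apply L (mat 1) = -1"
  proof -
    have d1: "((\<lambda>t. W (mat 1 + t *\<^sub>R mat 1)) has_real_derivative blinfun_apply L (mat 1)) (at 0)"
      by (rule line_deriv[OF dL])
    have d2: "((\<lambda>t. W (mat 1 + t *\<^sub>R mat 1)) has_real_derivative -1) (at 0)"
    proof -
      have "((\<lambda>t. 1 / (1 + t)) has_real_derivative - (1 / ((1 + 0) * (1 + 0)))) (at (0::real))"
        by (auto intro!: derivative_eq_intros)
      then have h: "((\<lambda>t. 1 / (1 + t)) has_real_derivative -1) (at (0::real))" by simp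
      show ?thesis
      proof (rule has_field_derivative_transform_within_open[OF h, of "{-1<..}"])
        fix t :: real assume t: "t \<in> {-1<..}"
        have "mat 1 + t *\<^sub>R mat 1 = (1 + t) *\<^sub>R (mat 1 :: real^3^3)" by (simp add: scaleR_add_left)
        then show "1 / (1 + t) = W (mat 1 + t *\<^sub>R mat 1)" using W_hom[OF I, of "1+t"] t W_norm by simp
      qed auto
    qed
    show ?thesis using DERIV_unique[OF d1 d2] .
  qed
  have "blinfun_apply L (mat 1) = blinfun_apply L (Ek 1) + blinfun_apply L (Ek 2) + blinfun_apply L (Ek 3)"
    unfolding E_sum[symmetric] by (simp add: blinfun.add_right)
  then have LE1: "blinfun_apply L (Ek 1) = -1/3" using LI e12 e23 by simp
  have dg: "(g has_real_derivative blinfun_apply L (Ek 1)) (at 1)"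
  proof -
    have "((\<lambda>t. W (mat 1 + t *\<^sub>R Ek 1)) has_real_derivative blinfun_apply L (Ek 1)) (at (1 + -1))"
      using line_deriv[OF dL] by simp
    then have h: "((\<lambda>y. W (mat 1 + (y + -1) *\<^sub>R Ek 1)) has_real_derivative blinfun_apply L (Ek 1)) (at 1)"
      using DERIV_shift[of "\<lambda>t. W (mat 1 + t *\<^sub>R Ek 1)" _ 1 "-1"] by simp
    show ?thesis
    proof (rule has_field_derivative_transform_within_open[OF h, of "{0<..}"])
      fix y :: real assume "y \<in> {0<..}"
      then show "W (mat 1 + (y + -1) *\<^sub>R Ek 1) = g y" using g_def[of y] by (simp add: uniaxial_def Ek_def)
    qed auto
  qed
  show "deriv g 1 = -1/3" using DERIV_imp_deriv[OF dg] LE1 by simp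
qed


theorem theorem1:
  fixes G :: real and W :: "real^3^3 \<Rightarrow> real" and g :: "real \<Rightarrow> real"
  assumes G_pos: "G > 0"
    and W_C1: "\<exists>W' :: ((real^3^3) \<Rightarrow> ((real^3^3) \<Rightarrow>\<^sub>L real)).
                 continuous_on GLp3 W' \<and> (\<forall>F\<in>GLp3. (W has_derivative blinfun_apply (W' F)) (at F))"
    and W_obj: "\<And>F Q. F \<in> GLp3 \<Longrightarrow> Q \<in> SO3 \<Longrightarrow> W (Q ** F) = W F"
    and W_iso: "\<And>F Q. F \<in> GLp3 \<Longrightarrow> Q \<in> SO3 \<Longrightarrow> W (F ** Q) = W F"
    and W_hom: "\<And>F \<sigma>. F \<in> GLp3 \<Longrightarrow> \<sigma> > 0 \<Longrightarrow> W (\<sigma> *\<^sub>R F) = W F / \<sigma>"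
    and W_norm: "W (mat 1) = 1"
    and g_def: "\<And>y. y > 0 \<Longrightarrow> g y = uniaxial W y"
    and g_C3: "\<forall>y>0. g differentiable (at y) \<and> deriv g differentiable (at y)
                      \<and> (deriv ^^ 2) g differentiable (at y)"
    and g3_cont: "continuous_on {0<..} ((deriv ^^ 3) g)"
    and g_cond: "(deriv ^^ 2) g 1 \<ge> 50 * (50 + (SUP y\<in>{1/2..3/2}. \<bar>(deriv ^^ 3) g y\<bar>))"
  shows "\<exists>\<mu>0>0. \<forall>\<mu>\<in>{-\<mu>0..\<mu>0}. \<exists>\<rho>>0. \<exists>\<phi> \<phi>' \<phi>'' :: real \<Rightarrow> real.
           (\<forall>R\<in>{0..1}. \<phi> R \<ge> 0)
         \<and> (\<forall>R\<in>{0..1}. (\<phi> has_real_derivative \<phi>' R) (at R within {0..1}))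
         \<and> (\<forall>R\<in>{0..1}. (\<phi>' has_real_derivative \<phi>'' R) (at R within {0..1}))
         \<and> \<phi> 0 = 0 \<and> \<phi>'' 0 = 0
         \<and> (\<forall>R\<in>{0..1}. \<phi>' R > 0)
         \<and> (let lam = (\<lambda>R. if R = 0 then \<phi>' 0 else \<phi> R / R);
                yy = (\<lambda>R. \<phi>' R / lam R)
            in (\<forall>R\<in>{0<..1}. \<exists>D.
                  ((\<lambda>r. r ^ 4 / \<phi> r * deriv g (yy r)) has_real_derivative D) (at R within {0..1})
                \<and> (\<phi> R)\<^sup>2 / R ^ 5 * D + \<phi> R / R\<^sup>2 * g (yy R)
                    = (4 * pi / 3 * G * \<rho> + \<mu> * (lam R) ^ 3) * \<rho> powr (-1/3) * \<phi> R)
               \<and> deriv g (yy 1) = 0)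
         \<and> \<phi> 1 = 1"
proof -
  have gW: "g 1 = 1" "deriv g 1 = -1/3" using W_facts[OF W_C1 W_obj W_iso W_hom W_norm g_def] by auto
  define a where "a = (deriv ^^ 2) g 1"
  define M where "M = (SUP y\<in>{1/2..3/2}. \<bar>(deriv ^^ 3) g y\<bar>)"
  have f2: "(deriv ^^ 2) g = deriv (deriv g)" by (simp add: eval_nat_numeral)
  have f3: "(deriv ^^ 3) g = deriv (deriv (deriv g))" by (simp add: eval_nat_numeral)
  have bdd: "bdd_above ((\<lambda>y. \<bar>(deriv ^^ 3) g y\<bar>) ` {1/2..3/2})"
  proof -
    have "continuous_on {1/2..3/2} ((deriv ^^ 3) g)" by (rule continuous_on_subset[OF g3_cont]) auto
    then have "continuous_on {1/2..3/2} (\<lambda>y. \<bar>(deriv ^^ 3) g y\<bar>)" by (intro continuous_intros)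
    then have "compact ((\<lambda>y. \<bar>(deriv ^^ 3) g y\<bar>) ` {1/2..3/2})" by (intro compact_continuous_image) auto
    then show ?thesis by (intro bounded_imp_bdd_above compact_imp_bounded)
  qed
  interpret ode_setup g a M
  proof
    show "g 1 = 1" using gW by simp
    show "deriv g 1 = -1/3" using gW by simp
    fix y :: real assume y: "y > 0"
    show "(g has_real_derivative deriv g y) (at y)"
      using g_C3 y DERIV_deriv_iff_real_differentiable by blast
    show "(deriv g has_real_derivative deriv (deriv g) y) (at y)"
      using g_C3 y DERIV_deriv_iff_real_differentiable by blast
    show "(deriv (deriv g) has_real_derivative deriv (deriv (deriv g)) y) (at y)"
      using g_C3 y DERIV_deriv_iff_real_differentiable f2 by metis
  next
    show "a = deriv (deriv g) 1" by (simp add: a_def f2)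
    show "50 * (50 + M) \<le> a" using g_cond by (simp add: a_def M_def)
    fix y :: real assume y: "y \<in> {1/2..3/2}"
    have "\<bar>(deriv ^^ 3) g y\<bar> \<le> M" unfolding M_def by (rule cSUP_upper[OF y bdd])
    then show "\<bar>deriv (deriv (deriv g)) y\<bar> \<le> M" by (simp add: f3)
  qed
  define \<kappa> where "\<kappa> = 4 * pi / 3 * G"
  have kp: "\<kappa> > 0" using G_pos by (simp add: \<kappa>_def)
  define \<mu>0 where "\<mu>0 = sqrt (1/\<kappa>) / 10"
  have mu0: "\<mu>0 > 0" using kp by (simp add: \<mu>0_def)
  show ?thesis
  proof (rule exI[of _ \<mu>0], intro conjI mu0 ballI)
    fix \<mu> :: real assume mu: "\<mu> \<in> {-\<mu>0..\<mu>0}"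
    define mf where "mf c = \<mu> / sqrt (c/\<kappa>)" for c
    have sq_pos: "sqrt (c/\<kappa>) > 0" if "c \<in> {1..3}" for c using that kp by auto
    have mc: "continuous_on {1..3} mf" unfolding mf_def[abs_def]
      using kp by (intro continuous_intros) auto
    have mb: "\<bar>mf c\<bar> \<le> 1/10" if c: "c \<in> {1..3}" for c
    proof -
      have s1: "sqrt (1/\<kappa>) \<le> sqrt (c/\<kappa>)" using c kp by (auto intro!: divide_right_mono)
      have s0: "sqrt (1/\<kappa>) > 0" using kp by simp
      have "\<bar>mf c\<bar> = \<bar>\<mu>\<bar> / sqrt (c/\<kappa>)" using sq_pos[OF c] by (simp add: mf_def abs_divide)
      also have "\<dots> \<le> \<mu>0 / sqrt (1/\<kappa>)"
        using mu s1 s0 by (intro frac_le) auto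
      also have "\<dots> = 1/10" using s0 by (simp add: \<mu>0_def)
      finally show ?thesis .
    qed
    obtain c where c: "c \<in> {1..3}" and root: "d1 (1 + apply_bcontfun (zfix c (mf c)) 1) = 0"
      using shoot[OF mc mb] by blast
    have p: "params c (mf c)" using c mb[OF c] by (simp add: params_def)
    let ?z = "apply_bcontfun (zfix c (mf c))"
    obtain \<phi> \<phi>' \<phi>'' :: "real \<Rightarrow> real" where sol:
           "(\<forall>R\<in>{0..1}. \<phi> R \<ge> 0)
         \<and> (\<forall>R\<in>{0..1}. (\<phi> has_real_derivative \<phi>' R) (at R within {0..1}))
         \<and> (\<forall>R\<in>{0..1}. (\<phi>' has_real_derivative \<phi>'' R) (at R within {0..1}))
         \<and> \<phi> 0 = 0 \<and> \<phi>'' 0 = 0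
         \<and> (\<forall>R\<in>{0..1}. \<phi>' R > 0)
         \<and> (let lam = (\<lambda>R. if R = 0 then \<phi>' 0 else \<phi> R / R);
                yy = (\<lambda>R. \<phi>' R / lam R)
            in (\<forall>R\<in>{0<..1}. \<exists>D.
                  ((\<lambda>r. r ^ 4 / \<phi> r * deriv g (yy r)) has_real_derivative D) (at R within {0..1})
                \<and> (\<phi> R)\<^sup>2 / R ^ 5 * D + \<phi> R / R\<^sup>2 * g (yy R)
                    = (c + mf c * (lam R) ^ 3) * \<phi> R)
               \<and> deriv g (yy 1) = d1 (1 + ?z 1))
         \<and> \<phi> 1 = 1"
      using solution[OF p fix_props(1)[OF p] fix_props(2)[OF p]] by blast
    define s where "s = sqrt (c/\<kappa>)"
    have s0: "s > 0" using sq_pos[OF c] by (simp add: s_def)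
    define \<rho> where "\<rho> = s^3"
    have rho0: "\<rho> > 0" using s0 by (simp add: \<rho>_def)
    have rp: "\<rho> powr (-1/3) = 1/s"
    proof -
      have "\<rho> = s powr (real 3)" using s0 by (simp add: \<rho>_def powr_realpow)
      then have "\<rho> powr (-1/3) = s powr (real 3 * (-1/3))" by (simp add: powr_powr)
      also have "\<dots> = s powr -1" by simp
      also have "\<dots> = 1/s" using s0 by (simp add: powr_neg_one)
      finally show ?thesis .
    qed
    have ss: "s^2 = c/\<kappa>" unfolding s_def using c kp by simp
    have key: "(4 * pi / 3 * G * \<rho> + \<mu> * L ^ 3) * \<rho> powr (-1/3) * X = (c + mf c * L ^ 3) * X" for L X
    proof -
      have "4 * pi / 3 * G * \<rho> * (1/s) = \<kappa> * s^2" using s0 by (simp add: \<kappa>_def \<rho>_def power2_eq_square eval_nat_numeral)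
      also have "\<dots> = c" using ss kp by simp
      finally have e1: "4 * pi / 3 * G * \<rho> * (1/s) = c" .
      have e2: "mf c = \<mu> * (1/s)" by (simp add: mf_def s_def)
      show ?thesis unfolding rp using e1 e2 by (simp add: algebra_simps)
    qed
    show "\<exists>\<rho>>0. \<exists>\<phi> \<phi>' \<phi>'' :: real \<Rightarrow> real.
           (\<forall>R\<in>{0..1}. \<phi> R \<ge> 0)
         \<and> (\<forall>R\<in>{0..1}. (\<phi> has_real_derivative \<phi>' R) (at R within {0..1}))
         \<and> (\<forall>R\<in>{0..1}. (\<phi>' has_real_derivative \<phi>'' R) (at R within {0..1}))
         \<and> \<phi> 0 = 0 \<and> \<phi>'' 0 = 0
         \<and> (\<forall>R\<in>{0..1}. \<phi>' R > 0)
         \<and> (let lam = (\<lambda>R. if R = 0 then \<phi>' 0 else \<phi> R / R);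
                yy = (\<lambda>R. \<phi>' R / lam R)
            in (\<forall>R\<in>{0<..1}. \<exists>D.
                  ((\<lambda>r. r ^ 4 / \<phi> r * deriv g (yy r)) has_real_derivative D) (at R within {0..1})
                \<and> (\<phi> R)\<^sup>2 / R ^ 5 * D + \<phi> R / R\<^sup>2 * g (yy R)
                    = (4 * pi / 3 * G * \<rho> + \<mu> * (lam R) ^ 3) * \<rho> powr (-1/3) * \<phi> R)
               \<and> deriv g (yy 1) = 0)
         \<and> \<phi> 1 = 1"
      apply (rule exI[of _ \<rho>], rule conjI[OF rho0])
      apply (rule exI[of _ \<phi>], rule exI[of _ \<phi>'], rule exI[of _ \<phi>''])
      using sol[unfolded root Let_def] unfolding Let_def key by blast
  qed
qed


end
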